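(* Let $m,n\ge2$ and let $\Gamma=\langle s\rangle*\langle t\rangle\subseteq\mathrm{PGL}_2(K)$ be a discrete subgroup isomorphic to $C_m*C_n$, with $s$ of order $m$ and $t$ of order $n$, normalised (by conjugation) so that the fixed points of $s$ are $0,\infty$ and the fixed points of $t$ are $1,\lambda$ with $|\lambda|=1$. Then $$|\lambda-1|<\alpha_p(m,n).$$ Conversely, for every $\lambda\in K$ with $|\lambda|=1$, $\lambda\neq1$ and $|\lambda-1|<\alpha_p(m,n)$, there exist $s,t\in\mathrm{PGL}_2(K)$ of orders $m,n$ with fixed points $\{0,\infty\}$ and $\{1,\lambda\}$ respectively such that $\langle s,t\rangle$ is a discrete subgroup of $\mathrm{PGL}_2(K)$ isomorphic to $C_m*C_n$ (via $s,t$).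
   Context: $K$ is a finite extension of $\mathbb{Q}_p$ containing the needed roots of unity, with absolute value $|\cdot|$. For an integer $k$, $\epsilon_k=1$ if $p\mid k$ and $\epsilon_k=0$ otherwise, and $\alpha_p(m,n):=|1-\zeta_p|^{\epsilon_m+\epsilon_n}$ where $\zeta_p$ is a primitive $p$-th root of unity. *)

theory Defs
  imports Complex_Main "HOL-Computational_Algebra.Primes"
begin

text \<open>K is modelled as a field of characteristic 0 with a non-archimedean
absolute value absv such that absv p < 1 (residue characteristic p) and whose
closed unit ball is sequentially compact (hence K is complete and locally
compact).  A nondiscrete locally compact field of characteristic 0 with
absv p < 1 is exactly a finite extension of Q_p (with an absolute value
equivalent to the extension of the p-adic one).\<close>

definition padic_local_field :: "nat \<Rightarrow> ('k::field_char_0 \<Rightarrow> real) \<Rightarrow> bool" where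
  "padic_local_field p absv \<longleftrightarrow>
     prime p \<and>
     (\<forall>x. 0 \<le> absv x) \<and>
     (\<forall>x. absv x = 0 \<longleftrightarrow> x = 0) \<and>
     (\<forall>x y. absv (x * y) = absv x * absv y) \<and>
     (\<forall>x y. absv (x + y) \<le> max (absv x) (absv y)) \<and>
     absv (of_nat p) < 1 \<and>
     (\<forall>X::nat \<Rightarrow> 'k. (\<forall>i. absv (X i) \<le> 1) \<longrightarrow>
        (\<exists>(r::nat \<Rightarrow> nat) (L::'k). strict_mono r \<and>
           (\<forall>e::real>0. \<exists>N::nat. \<forall>i\<ge>N. absv (X (r i) - L) < e)))"

definition primitive_root_of_unity :: "nat \<Rightarrow> 'k::field \<Rightarrow> bool" where
  "primitive_root_of_unity k z \<longleftrightarrow> z ^ k = 1 \<and> (\<forall>j. 0 < j \<and> j < k \<longrightarrow> z ^ j \<noteq> 1)"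

definition eps :: "nat \<Rightarrow> nat \<Rightarrow> nat" where
  "eps p k = (if p dvd k then 1 else 0)"

text \<open>alpha_p(m,n) = |1 - zeta_p|^(eps_m + eps_n).  If the exponent is 0 the
value is 1 regardless of the choice of zeta_p.\<close>
definition alpha :: "('k::field \<Rightarrow> real) \<Rightarrow> nat \<Rightarrow> nat \<Rightarrow> nat \<Rightarrow> real" where
  "alpha absv p m n =
     absv (1 - (SOME z. primitive_root_of_unity p z)) ^ (eps p m + eps p n)"

text \<open>A matrix (a,b,c,d) stands for [[a,b],[c,d]].  An element of PGL_2(K) is
represented by an invertible matrix; two matrices represent the same element
iff they are proportional.\<close>

type_synonym 'k m2 = "'k \<times> 'k \<times> 'k \<times> 'k"

fun m2_mult :: "'k::comm_ring_1 m2 \<Rightarrow> 'k m2 \<Rightarrow> 'k m2" where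
  "m2_mult (a, b, c, d) (e, f, g, h) =
     (a * e + b * g, a * f + b * h, c * e + d * g, c * f + d * h)"

definition m2_id :: "'k::comm_ring_1 m2" where
  "m2_id = (1, 0, 0, 1)"

fun m2_det :: "'k::comm_ring_1 m2 \<Rightarrow> 'k" where
  "m2_det (a, b, c, d) = a * d - b * c"

fun m2_adj :: "'k::comm_ring_1 m2 \<Rightarrow> 'k m2" where
  "m2_adj (a, b, c, d) = (d, - b, - c, a)"

fun m2_smult :: "'k::comm_ring_1 \<Rightarrow> 'k m2 \<Rightarrow> 'k m2" where
  "m2_smult x (a, b, c, d) = (x * a, x * b, x * c, x * d)"

definition m2_pow :: "'k::comm_ring_1 m2 \<Rightarrow> nat \<Rightarrow> 'k m2" where
  "m2_pow M k = (m2_mult M ^^ k) m2_id"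

definition proj_eq :: "'k::field m2 \<Rightarrow> 'k m2 \<Rightarrow> bool" where
  "proj_eq M N \<longleftrightarrow> (\<exists>x. x \<noteq> 0 \<and> M = m2_smult x N)"

definition pgl_has_order :: "'k::field m2 \<Rightarrow> nat \<Rightarrow> bool" where
  "pgl_has_order M k \<longleftrightarrow> 0 < k \<and> proj_eq (m2_pow M k) m2_id \<and>
     (\<forall>j. 0 < j \<and> j < k \<longrightarrow> \<not> proj_eq (m2_pow M j) m2_id)"

definition m2_prod :: "'k::comm_ring_1 m2 list \<Rightarrow> 'k m2" where
  "m2_prod ws = foldr m2_mult ws m2_id"

text \<open>The subgroup of PGL_2 generated by s and t (as a set of matrix
representatives): all finite products of s, t and their inverses
(the adjugate represents the inverse in PGL_2).\<close>
definition gen_group :: "'k::comm_ring_1 m2 \<Rightarrow> 'k m2 \<Rightarrow> 'k m2 set" where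
  "gen_group s t = {m2_prod ws | ws. set ws \<subseteq> {s, t, m2_adj s, m2_adj t}}"

text \<open>Discreteness: the identity is isolated in the subgroup for the topology
of PGL_2(K), i.e. (the quotient map GL_2 \<rightarrow> PGL_2 being open) there is
an e > 0 such that every element having a representative e-close to the
identity matrix is the identity.\<close>
definition pgl_discrete :: "('k::field \<Rightarrow> real) \<Rightarrow> 'k m2 set \<Rightarrow> bool" where
  "pgl_discrete absv G \<longleftrightarrow>
     (\<exists>e>0. \<forall>g\<in>G. \<forall>a b c d.
        proj_eq (a, b, c, d) g \<and> absv (a - 1) < e \<and> absv b < e \<and>
        absv c < e \<and> absv (d - 1) < e \<longrightarrow> proj_eq g m2_id)"

text \<open>Free product: the homomorphism C_m * C_n \<rightarrow> PGL_2 sending the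
generators to s and t is injective, i.e. no nonempty reduced word
s^a1 t^b1 ... (alternating, 0 < a_i < m, 0 < b_i < n) is trivial.
A word is a list of (is_s, exponent).\<close>
definition reduced_word :: "nat \<Rightarrow> nat \<Rightarrow> (bool \<times> nat) list \<Rightarrow> bool" where
  "reduced_word m n w \<longleftrightarrow>
     (\<forall>i<length w. 0 < snd (w ! i) \<and>
        snd (w ! i) < (if fst (w ! i) then m else n)) \<and>
     (\<forall>i. Suc i < length w \<longrightarrow> fst (w ! i) \<noteq> fst (w ! Suc i))"

definition eval_word :: "'k::comm_ring_1 m2 \<Rightarrow> 'k m2 \<Rightarrow> (bool \<times> nat) list \<Rightarrow> 'k m2" where
  "eval_word s t w = m2_prod (map (\<lambda>(b, k). m2_pow (if b then s else t) k) w)"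

definition free_product_via :: "nat \<Rightarrow> nat \<Rightarrow> 'k::field m2 \<Rightarrow> 'k m2 \<Rightarrow> bool" where
  "free_product_via m n s t \<longleftrightarrow>
     pgl_has_order s m \<and> pgl_has_order t n \<and>
     (\<forall>w. w \<noteq> [] \<and> reduced_word m n w \<longrightarrow> \<not> proj_eq (eval_word s t w) m2_id)"

text \<open>P^1(K) = K \<union> {\<infinity>}, with None = \<infinity>.\<close>
fun mobius :: "'k::field m2 \<Rightarrow> 'k option \<Rightarrow> 'k option" where
  "mobius (a, b, c, d) None = (if c = 0 then None else Some (a / c))"
| "mobius (a, b, c, d) (Some x) =
     (if c * x + d = 0 then None else Some ((a * x + b) / (c * x + d)))"

definition fixed_points :: "'k::field m2 \<Rightarrow> 'k option set" where
  "fixed_points M = {z. mobius M z = z}"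

end

theory Submission
  imports Defs "HOL-Computational_Algebra.Polynomial"
begin

lemma m2_mult_assoc: "m2_mult (m2_mult A B) C = m2_mult A (m2_mult B C)"
  by (cases A rule: prod_cases4; cases B rule: prod_cases4; cases C rule: prod_cases4) (simp add: algebra_simps)

lemma m2_mult_id_left[simp]: "m2_mult m2_id A = A"
  by (cases A rule: prod_cases4) (simp add: m2_id_def)
lemma m2_mult_id_right[simp]: "m2_mult A m2_id = A"
  by (cases A rule: prod_cases4) (simp add: m2_id_def)

lemma m2_pow_0[simp]: "m2_pow M 0 = m2_id" by (simp add: m2_pow_def)
lemma m2_pow_Suc: "m2_pow M (Suc k) = m2_mult M (m2_pow M k)" by (simp add: m2_pow_def)
lemma m2_pow_1[simp]: "m2_pow M 1 = M" by (simp add: m2_pow_def)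
lemma m2_pow_Suc0[simp]: "m2_pow M (Suc 0) = M" by (simp add: m2_pow_def)
lemma m2_pow_add: "m2_pow M (a + b) = m2_mult (m2_pow M a) (m2_pow M b)"
  by (induction a) (auto simp: m2_pow_Suc m2_mult_assoc)
lemma m2_pow_Suc': "m2_pow M (Suc k) = m2_mult (m2_pow M k) M"
  using m2_pow_add[of M k 1] by (simp add: m2_pow_def)
lemma m2_pow_mult: "m2_pow M (a * b) = m2_pow (m2_pow M a) b"
  by (induction b) (auto simp: m2_pow_Suc m2_pow_add)

lemma m2_prod_Nil[simp]: "m2_prod [] = m2_id" by (simp add: m2_prod_def)
lemma m2_prod_Cons[simp]: "m2_prod (x # xs) = m2_mult x (m2_prod xs)" by (simp add: m2_prod_def)
lemma m2_prod_append: "m2_prod (xs @ ys) = m2_mult (m2_prod xs) (m2_prod ys)"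
  by (induction xs) (auto simp: m2_mult_assoc)
lemma m2_prod_replicate: "m2_prod (replicate k M) = m2_pow M k"
  by (induction k) (auto simp: m2_pow_Suc)
lemma m2_prod_concat: "m2_prod (concat xss) = m2_prod (map m2_prod xss)"
  by (induction xss) (auto simp: m2_prod_append)

lemma m2_det_mult: "m2_det (m2_mult A B) = m2_det A * m2_det B"
  by (cases A rule: prod_cases4; cases B rule: prod_cases4) (simp add: algebra_simps)
lemma m2_adj_mult: "m2_mult (m2_adj A) A = m2_smult (m2_det A) m2_id"
  by (cases A rule: prod_cases4) (simp add: m2_id_def algebra_simps)
lemma m2_mult_adj: "m2_mult A (m2_adj A) = m2_smult (m2_det A) m2_id"
  by (cases A rule: prod_cases4) (simp add: m2_id_def algebra_simps)
lemma m2_smult_mult_left: "m2_mult (m2_smult x A) B = m2_smult x (m2_mult A B)"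
  by (cases A rule: prod_cases4; cases B rule: prod_cases4) (simp add: algebra_simps)
lemma m2_smult_mult_right: "m2_mult A (m2_smult x B) = m2_smult x (m2_mult A B)"
  by (cases A rule: prod_cases4; cases B rule: prod_cases4) (simp add: algebra_simps)
lemma m2_smult_smult: "m2_smult x (m2_smult y A) = m2_smult (x * y) A"
  by (cases A rule: prod_cases4) (simp add: algebra_simps)
lemma m2_smult_1[simp]: "m2_smult 1 A = A"
  by (cases A rule: prod_cases4) simp
lemma m2_pow_smult: "m2_pow (m2_smult x A) k = m2_smult (x ^ k) (m2_pow A k)"
  by (induction k) (auto simp: m2_pow_Suc m2_smult_mult_left m2_smult_mult_right m2_smult_smult mult.commute)
lemma m2_det_pow: "m2_det (m2_pow A k) = m2_det A ^ k"
  by (induction k) (auto simp: m2_pow_Suc m2_det_mult m2_id_def)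

lemma proj_eq_refl[simp]: "proj_eq (M::'k::field m2) M"
  unfolding proj_eq_def by (rule exI[of _ 1]) simp
lemma proj_eq_sym: "proj_eq (M::'k::field m2) N \<Longrightarrow> proj_eq N M"
  unfolding proj_eq_def
proof (elim exE conjE)
  fix x assume "x \<noteq> 0" "M = m2_smult x N"
  then show "\<exists>y. y \<noteq> 0 \<and> N = m2_smult y M"
    by (intro exI[of _ "inverse x"]) (simp add: m2_smult_smult)
qed
lemma proj_eq_trans: "proj_eq (M::'k::field m2) N \<Longrightarrow> proj_eq N P \<Longrightarrow> proj_eq M P"
  unfolding proj_eq_def
proof (elim exE conjE)
  fix x y assume "x \<noteq> 0" "M = m2_smult x N" "y \<noteq> 0" "N = m2_smult y P"
  then show "\<exists>z. z \<noteq> 0 \<and> M = m2_smult z P"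
    by (intro exI[of _ "x*y"]) (simp add: m2_smult_smult)
qed
lemma proj_eq_smult: "x \<noteq> 0 \<Longrightarrow> proj_eq (m2_smult x M) (M::'k::field m2)"
  unfolding proj_eq_def by auto
lemma proj_eq_smult': "x \<noteq> 0 \<Longrightarrow> proj_eq M (m2_smult x (M::'k::field m2))"
  by (rule proj_eq_sym, rule proj_eq_smult)
lemma proj_eq_mult: "proj_eq (M::'k::field m2) M' \<Longrightarrow> proj_eq N N' \<Longrightarrow> proj_eq (m2_mult M N) (m2_mult M' N')"
  unfolding proj_eq_def
proof (elim exE conjE)
  fix x y assume "x \<noteq> 0" "M = m2_smult x M'" "y \<noteq> 0" "N = m2_smult y N'"
  then show "\<exists>z. z \<noteq> 0 \<and> m2_mult M N = m2_smult z (m2_mult M' N')"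
    by (intro exI[of _ "x*y"]) (simp add: m2_smult_smult m2_smult_mult_left m2_smult_mult_right mult.commute)
qed
lemma proj_eq_pow: "proj_eq (M::'k::field m2) M' \<Longrightarrow> proj_eq (m2_pow M k) (m2_pow M' k)"
  by (induction k) (auto simp: m2_pow_Suc intro: proj_eq_mult)
lemma proj_eq_det: "proj_eq (M::'k::field m2) N \<Longrightarrow> m2_det N \<noteq> 0 \<Longrightarrow> m2_det M \<noteq> 0"
  unfolding proj_eq_def by (cases N rule: prod_cases4) (auto simp: algebra_simps)


locale padic =
  fixes p :: nat and absv :: "'k::field_char_0 \<Rightarrow> real"
  assumes K: "padic_local_field p absv"
begin

lemma prime_p: "prime p" using K unfolding padic_local_field_def by blast
lemma av_nonneg[simp]: "0 \<le> absv x" using K unfolding padic_local_field_def by blast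
lemma av_zero_iff[simp]: "absv x = 0 \<longleftrightarrow> x = 0" using K unfolding padic_local_field_def by blast
lemma av_mult: "absv (x * y) = absv x * absv y" using K unfolding padic_local_field_def by blast
lemma av_ultra: "absv (x + y) \<le> max (absv x) (absv y)" using K unfolding padic_local_field_def by blast
lemma av_p: "absv (of_nat p) < 1" using K unfolding padic_local_field_def by blast
lemma av_compact: "(\<forall>i. absv (X i) \<le> 1) \<Longrightarrow>
        (\<exists>(r::nat \<Rightarrow> nat) (L::'k). strict_mono r \<and>
           (\<forall>e::real>0. \<exists>N::nat. \<forall>i\<ge>N. absv (X (r i) - L) < e))"
  using K unfolding padic_local_field_def by blast

lemma av_0[simp]: "absv 0 = 0" by simp

lemma av_pos: "x \<noteq> 0 \<Longrightarrow> 0 < absv x"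
  using av_nonneg[of x] av_zero_iff[of x] by linarith

lemma av_1[simp]: "absv 1 = 1"
proof -
  have "absv 1 = absv 1 * absv 1" using av_mult[of 1 1] by simp
  moreover have "absv 1 \<noteq> 0" by simp
  ultimately show ?thesis by (metis mult_cancel_right1)
qed

lemma av_minus1[simp]: "absv (-1) = 1"
proof -
  have "absv (-1) * absv (-1) = absv ((-1) * (-1))" by (rule av_mult[symmetric])
  then have "absv (-1) * absv (-1) = 1" by (simp only: mult_minus1 minus_minus av_1)
  then have "absv (-1) ^ 2 = 1" by (simp add: power2_eq_square)
  then have "absv (-1) = 1 \<or> absv (-1) = -1" using power2_eq_1_iff by blast
  then show ?thesis using av_nonneg[of "-1"] by linarith
qed

lemma av_minus[simp]: "absv (- x) = absv x"
  using av_mult[of "-1" x] by simp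

lemma av_diff_sym: "absv (x - y) = absv (y - x)"
  by (metis av_minus minus_diff_eq)

lemma av_diff_ultra: "absv (x - y) \<le> max (absv x) (absv y)"
  using av_ultra[of x "-y"] by simp

lemma av_add_le: "absv x \<le> c \<Longrightarrow> absv y \<le> c \<Longrightarrow> absv (x + y) \<le> c"
  using av_ultra[of x y] by linarith
lemma av_add_less: "absv x < c \<Longrightarrow> absv y < c \<Longrightarrow> absv (x + y) < c"
  using av_ultra[of x y] by linarith
lemma av_diff_le: "absv x \<le> c \<Longrightarrow> absv y \<le> c \<Longrightarrow> absv (x - y) \<le> c"
  using av_diff_ultra[of x y] by linarith
lemma av_diff_less: "absv x < c \<Longrightarrow> absv y < c \<Longrightarrow> absv (x - y) < c"
  using av_diff_ultra[of x y] by linarith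

lemma av_strict: "absv a < absv b \<Longrightarrow> absv (a + b) = absv b"
proof -
  assume h: "absv a < absv b"
  have "absv (a + b) \<le> absv b" using av_ultra[of a b] h by linarith
  moreover have "absv b \<le> max (absv (a+b)) (absv a)" using av_diff_ultra[of "a+b" a] by simp
  ultimately show ?thesis using h by linarith
qed

lemma av_strict': "absv a < absv b \<Longrightarrow> absv (b + a) = absv b"
  using av_strict[of a b] by (simp only: add.commute)

lemma av_power: "absv (x ^ k) = absv x ^ k"
  by (induction k) (auto simp: av_mult)

lemma av_inverse: "absv (inverse x) = inverse (absv x)"
proof (cases "x = 0")
  case False
  have "absv x * absv (inverse x) = absv (x * inverse x)" by (rule av_mult[symmetric])
  also have "\<dots> = 1" using False by simp
  finally have "absv x * absv (inverse x) = 1" .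
  then show ?thesis using False by (metis av_pos inverse_unique less_irrefl)
qed simp

lemma av_divide: "absv (x / y) = absv x / absv y"
  by (simp add: divide_inverse av_mult av_inverse)

lemma av_of_nat_le: "absv (of_nat n) \<le> 1"
proof (induction n)
  case (Suc n)
  have "absv (1 + of_nat n) \<le> 1" by (rule av_add_le) (use Suc in auto)
  then show ?case by simp
qed simp

lemma av_of_int_le: "absv (of_int n) \<le> 1"
proof (cases "n \<ge> 0")
  case True
  then have "(of_int n::'k) = of_nat (nat n)" by (metis int_nat_eq of_int_of_nat_eq)
  then show ?thesis using av_of_nat_le[of "nat n"] by simp
next
  case False
  then have "n = - int (nat (-n))" by simp
  then have "(of_int n::'k) = - of_nat (nat (-n))" by (metis of_int_minus of_int_of_nat_eq)
  then show ?thesis using av_of_nat_le[of "nat (-n)"] by simp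
qed

lemma av_sum_le: "(\<And>i. i \<in> A \<Longrightarrow> absv (f i) \<le> c) \<Longrightarrow> 0 \<le> c \<Longrightarrow> absv (sum f A) \<le> c"
proof (induction A rule: infinite_finite_induct)
  case (insert x F)
  then show ?case by (simp add: av_add_le)
qed auto

lemma av_of_nat_coprime: assumes "\<not> p dvd e" shows "absv (of_nat e) = 1"
proof -
  have "coprime p e" using assms prime_p by (simp add: prime_imp_coprime)
  then have "coprime (int e) (int p)" by (simp add: coprime_commute)
  then have "gcd (int e) (int p) = 1" by simp
  then obtain u v where uv: "u * int e + v * int p = 1"
    using bezout_int[of "int e" "int p"] by auto
  have "(1::'k) = of_int u * of_nat e + of_int v * of_nat p"
  proof -
    have "(of_int (u * int e + v * int p) :: 'k) = 1" using uv by simp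
    then show ?thesis by simp
  qed
  then have "absv (1::'k) \<le> max (absv (of_int u * of_nat e)) (absv (of_int v * (of_nat p::'k)))"
    using av_ultra by metis
  moreover have "absv (of_int u * (of_nat e::'k)) \<le> absv (of_nat e::'k)"
    using av_of_int_le[of u] by (simp add: av_mult mult_left_le_one_le)
  moreover have "absv (of_int v * (of_nat p::'k)) < 1"
    using av_of_int_le[of v] av_p
    by (simp add: av_mult) (meson av_nonneg le_less_trans mult_left_le_one_le)
  ultimately have "absv (of_nat e::'k) \<ge> 1" by simp
  then show ?thesis using av_of_nat_le[of e] by linarith
qed

lemma av_root_unity: "z ^ k = 1 \<Longrightarrow> 0 < k \<Longrightarrow> absv z = 1"
proof -
  assume "z ^ k = 1" "0 < k"
  then have "absv z ^ k = 1 ^ k" by (metis av_1 av_power power_one)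
  then show ?thesis using \<open>0 < k\<close> av_nonneg power_eq_iff_eq_base[of k "absv z" 1] by simp
qed

lemma av_one_minus_le: "absv z = 1 \<Longrightarrow> absv (1 - z) \<le> 1"
  by (rule av_diff_le) auto

lemma one_minus_pow_le: assumes "absv z = 1" shows "absv (1 - z ^ N) \<le> absv (1 - z)"
proof -
  have "absv (\<Sum>i<N. z^i) \<le> 1" by (rule av_sum_le) (auto simp: av_power assms)
  then show ?thesis
    by (simp add: one_diff_power_eq[of z N] av_mult mult_left_le)
qed

end

lemma pow_gcd_one:
  fixes x :: "'k::field"
  assumes "x ^ a = 1" "x ^ b = 1" shows "x ^ gcd a b = 1"
proof (cases "a = 0")
  case True then show ?thesis using assms by simp
next
  case False
  then obtain u v where uv: "a * u = b * v + gcd a b" using bezout_nat by blast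
  have "1 = x ^ (a * u)" using assms by (simp add: power_mult)
  also have "\<dots> = x ^ (b * v) * x ^ gcd a b" by (simp add: uv power_add)
  also have "\<dots> = x ^ gcd a b" using assms by (simp add: power_mult)
  finally show ?thesis by simp
qed

lemma prime_root_prim:
  fixes w :: "'k::field"
  assumes "prime q" "w ^ q = 1" "w \<noteq> 1"
  shows "primitive_root_of_unity q w"
  unfolding primitive_root_of_unity_def
proof (intro conjI allI impI)
  fix j assume j: "0 < j \<and> j < q"
  show "w ^ j \<noteq> 1"
  proof
    assume "w ^ j = 1"
    then have "w ^ gcd j q = 1" using pow_gcd_one assms by blast
    moreover have "gcd j q = 1"
      using j assms(1) by (metis gcd.commute nat_dvd_not_less prime_imp_coprime coprime_iff_gcd_eq_1)
    ultimately show False using assms by simp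
  qed
qed (use assms in auto)

lemma prim_pow_prim:
  fixes z :: "'k::field"
  assumes "primitive_root_of_unity m z" "q dvd m" "0 < q" "0 < m"
  shows "primitive_root_of_unity q (z ^ (m div q))"
  unfolding primitive_root_of_unity_def
proof (intro conjI allI impI)
  have "(z ^ (m div q)) ^ q = z ^ m" using assms(2) by (simp add: power_mult[symmetric])
  then show "(z ^ (m div q)) ^ q = 1" using assms(1) unfolding primitive_root_of_unity_def by simp
next
  fix j assume j: "0 < j \<and> j < q"
  obtain c where c: "m = q * c" using assms(2) by blast
  have cpos: "0 < c" using assms(4) c by (cases c) auto
  have "m div q = c" using c assms(3) by simp
  moreover have "0 < c * j \<and> c * j < m" using j cpos c by simp
  ultimately show "(z ^ (m div q)) ^ j \<noteq> 1"
    using assms(1) unfolding primitive_root_of_unity_def by (simp add: power_mult[symmetric])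
qed

lemma roots_are_powers:
  fixes z1 z2 :: "'k::field"
  assumes z1: "primitive_root_of_unity q z1" and z2: "z2 ^ q = 1" and q: "0 < q"
  shows "\<exists>j<q. z2 = z1 ^ j"
proof -
  define P :: "'k poly" where "P = monom 1 q - 1"
  have Pne: "P \<noteq> 0"
  proof
    assume "P = 0"
    then have "poly P 0 = 0" by simp
    then have "(0::'k) ^ q = 1" by (simp add: P_def poly_monom)
    then show False using q by (cases q) auto
  qed
  have degP: "degree P \<le> q"
    unfolding P_def using degree_diff_le_max[of "monom (1::'k) q" 1] degree_monom_le[of "1::'k" q] by simp
  have R: "{x. poly P x = 0} = {x. x ^ q = 1}" by (auto simp: P_def poly_monom)
  have finR: "finite {x::'k. x ^ q = 1}" using poly_roots_finite[OF Pne] R by simp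
  have cardR: "card {x::'k. x ^ q = 1} \<le> q" using card_poly_roots_bound[OF Pne] degP R by simp
  have inj: "inj_on (\<lambda>j. z1 ^ j) {..<q}"
  proof (rule inj_onI)
    fix i j assume ij: "i \<in> {..<q}" "j \<in> {..<q}" "z1 ^ i = z1 ^ j"
    have z1ne: "z1 \<noteq> 0"
    proof
      assume "z1 = 0" then show False using z1 q unfolding primitive_root_of_unity_def by (simp add: power_0_left)
    qed
    show "i = j"
    proof (rule ccontr)
      assume "i \<noteq> j"
      then consider "i < j" | "j < i" by linarith
      then show False
      proof cases
        case 1
        then have "z1 ^ j = z1 ^ i * z1 ^ (j - i)" by (simp add: power_add[symmetric])
        then have "z1 ^ (j - i) = 1" using ij z1ne by simp
        then show False using z1 1 ij unfolding primitive_root_of_unity_def by auto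
      next
        case 2
        then have "z1 ^ i = z1 ^ j * z1 ^ (i - j)" by (simp add: power_add[symmetric])
        then have "z1 ^ (i - j) = 1" using ij z1ne by simp
        then show False using z1 2 ij unfolding primitive_root_of_unity_def by auto
      qed
    qed
  qed
  have sub: "(\<lambda>j. z1 ^ j) ` {..<q} \<subseteq> {x. x ^ q = 1}"
  proof
    fix x assume "x \<in> (\<lambda>j. z1 ^ j) ` {..<q}"
    then obtain j where "x = z1 ^ j" by auto
    have "(z1 ^ j) ^ q = (z1 ^ q) ^ j" by (metis power_mult mult.commute)
    then show "x \<in> {x. x ^ q = 1}" using z1 \<open>x = z1 ^ j\<close> unfolding primitive_root_of_unity_def by simp
  qed
  have "card ((\<lambda>j. z1 ^ j) ` {..<q}) = q" using card_image[OF inj] by simp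
  then have "(\<lambda>j. z1 ^ j) ` {..<q} = {x. x ^ q = 1}"
    using card_subset_eq[OF finR sub] cardR card_mono[OF finR sub] by simp
  then show ?thesis using z2 by auto
qed

context padic
begin

lemma coprime_root_far:
  assumes "\<not> p dvd e" "0 < e" "u ^ e = 1" "u \<noteq> 1"
  shows "absv (1 - u) \<ge> 1"
proof (rule ccontr)
  assume "\<not> absv (1 - u) \<ge> 1"
  then have lt: "absv (1 - u) < 1" by simp
  have u1: "absv u = 1" using av_root_unity assms by blast
  have "(1 - u) * (\<Sum>i<e. u^i) = 0" using one_diff_power_eq[of u e] assms by simp
  then have S: "(\<Sum>i<e. u^i) = 0" using assms(4) by simp
  have "(\<Sum>i<e. u^i) = (\<Sum>i<e. u^i - 1) + of_nat e" by (simp add: sum_subtractf)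
  then have "of_nat e = - (\<Sum>i<e. u^i - 1)" using S by (simp add: eq_neg_iff_add_eq_0 add.commute)
  then have "absv (of_nat e) = absv (\<Sum>i<e. u^i - 1)" by simp
  also have "\<dots> \<le> absv (1 - u)"
  proof (rule av_sum_le)
    fix i show "absv (u ^ i - 1) \<le> absv (1 - u)"
      using one_minus_pow_le[OF u1, of i] by (simp add: av_diff_sym)
  qed simp
  finally show False using av_of_nat_coprime[OF assms(1)] lt by simp
qed


lemma root_lower:
  "\<omega> ^ d = 1 \<Longrightarrow> 0 < d \<Longrightarrow> \<omega> \<noteq> 1 \<Longrightarrow>
     absv (1 - \<omega>) \<ge> 1 \<or> (p dvd d \<and> (\<exists>z. primitive_root_of_unity p z \<and> absv (1 - z) \<le> absv (1 - \<omega>)))"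
proof (induction d arbitrary: \<omega> rule: less_induct)
  case (less d)
  show ?case
  proof (cases "p dvd d")
    case False
    then show ?thesis using coprime_root_far less.prems by blast
  next
    case True
    then obtain d' where d': "d = p * d'" by blast
    have p2: "p \<ge> 2" using prime_p by (simp add: prime_ge_2_nat)
    have d'pos: "0 < d'" using less.prems d' by (cases d') auto
    have lt: "d' < d" using d' p2 d'pos by simp
    have u1: "absv \<omega> = 1" using av_root_unity less.prems by blast
    show ?thesis
    proof (cases "\<omega> ^ p = 1")
      case True
      then have "primitive_root_of_unity p \<omega>" using prime_root_prim prime_p less.prems by blast
      then show ?thesis using \<open>p dvd d\<close> by blast
    next
      case False
      have "(\<omega> ^ p) ^ d' = 1" using less.prems d' by (simp add: power_mult[symmetric])
      from less.IH[OF lt this d'pos False]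
      have ih: "absv (1 - \<omega> ^ p) \<ge> 1 \<or> (\<exists>z. primitive_root_of_unity p z \<and> absv (1 - z) \<le> absv (1 - \<omega> ^ p))"
        by blast
      have le: "absv (1 - \<omega> ^ p) \<le> absv (1 - \<omega>)" by (rule one_minus_pow_le[OF u1])
      from ih show ?thesis
      proof
        assume "absv (1 - \<omega> ^ p) \<ge> 1" then show ?thesis using le by linarith
      next
        assume "\<exists>z. primitive_root_of_unity p z \<and> absv (1 - z) \<le> absv (1 - \<omega> ^ p)"
        then show ?thesis using le \<open>p dvd d\<close> by force
      qed
    qed
  qed
qed

lemma prim_dist_le:
  assumes z1: "primitive_root_of_unity p z1" and z2: "primitive_root_of_unity p z2"
  shows "absv (1 - z2) \<le> absv (1 - z1)"
proof -
  have p0: "0 < p" using prime_p prime_gt_0_nat by blast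
  obtain j where "z2 = z1 ^ j" using roots_are_powers[OF z1 _ p0] z2 unfolding primitive_root_of_unity_def by blast
  moreover have "absv z1 = 1" using av_root_unity z1 p0 unfolding primitive_root_of_unity_def by blast
  ultimately show ?thesis using one_minus_pow_le by simp
qed

definition ap :: real where "ap = absv (1 - (SOME z. primitive_root_of_unity p z))"

lemma ap_eq: fixes z :: 'k assumes "primitive_root_of_unity p z" shows "ap = absv (1 - z)"
proof -
  have "primitive_root_of_unity p (SOME z::'k. primitive_root_of_unity p z)" by (rule someI_ex) (use assms in blast)
  then show ?thesis unfolding ap_def using prim_dist_le assms by (meson antisym)
qed

lemma ap_pos_le: fixes z :: 'k assumes "primitive_root_of_unity p z" shows "0 < ap" "ap \<le> 1"
proof -
  have p0: "0 < p" using prime_p prime_gt_0_nat by blast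
  have p1: "1 < p" using prime_p prime_gt_1_nat by blast
  have "z \<noteq> 1" using assms p1 unfolding primitive_root_of_unity_def by (metis power_one_right zero_less_one)
  then show "0 < ap" using ap_eq[OF assms] av_pos by simp
  have "absv z = 1" using av_root_unity assms p0 unfolding primitive_root_of_unity_def by blast
  then show "ap \<le> 1" using ap_eq[OF assms] av_one_minus_le by simp
qed

lemma alpha_eq: "alpha absv p m n = ap ^ eps p m * ap ^ eps p n"
  unfolding alpha_def ap_def by (simp add: power_add)

definition af :: "nat \<Rightarrow> real" where "af m = ap ^ eps p m"

lemma af_props:
  fixes z :: 'k
  assumes z: "primitive_root_of_unity m z" and m: "0 < m"
  shows "0 < af m" "af m \<le> 1"
proof -
  have "0 < af m \<and> af m \<le> 1"
  proof (cases "p dvd m")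
    case True
    have p0: "0 < p" using prime_p prime_gt_0_nat by blast
    have "primitive_root_of_unity p (z ^ (m div p))" using prim_pow_prim[OF z True p0 m] .
    then show ?thesis using ap_pos_le True unfolding af_def eps_def by simp
  next
    case False then show ?thesis unfolding af_def eps_def by simp
  qed
  then show "0 < af m" "af m \<le> 1" by auto
qed

lemma af_lower:
  assumes z: "primitive_root_of_unity m z" and m: "0 < m" and k: "0 < k" "k < m"
  shows "af m \<le> absv (1 - z ^ k)"
proof -
  have ne: "z ^ k \<noteq> 1" using z k unfolding primitive_root_of_unity_def by blast
  have "(z ^ k) ^ m = 1" using z unfolding primitive_root_of_unity_def
    by (metis mult.commute power_mult power_one)
  from root_lower[OF this m ne] show ?thesis
  proof
    assume "1 \<le> absv (1 - z ^ k)" then show ?thesis using af_props[OF z m] by linarith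
  next
    assume "p dvd m \<and> (\<exists>za. primitive_root_of_unity p za \<and> absv (1 - za) \<le> absv (1 - z ^ k))"
    then obtain za where "p dvd m" "primitive_root_of_unity p za" "absv (1 - za) \<le> absv (1 - z ^ k)" by blast
    then show ?thesis unfolding af_def eps_def using ap_eq by simp
  qed
qed

definition kk :: "nat \<Rightarrow> nat" where "kk m = (if p dvd m then m div p else 1)"

lemma kk_props:
  assumes z: "primitive_root_of_unity m z" and m: "2 \<le> m"
  shows "0 < kk m" "kk m < m" "z ^ kk m \<noteq> 1" "absv (1 - z ^ kk m) \<le> af m"
proof -
  have p1: "1 < p" using prime_p prime_gt_1_nat by blast
  have p0: "0 < p" using p1 by simp
  show k0: "0 < kk m"
  proof (cases "p dvd m")
    case True
    then obtain c where "m = p * c" by blast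
    then show ?thesis using m p0 unfolding kk_def by (cases c) auto
  qed (simp add: kk_def)
  show k1: "kk m < m" unfolding kk_def using m p1 by auto
  show "z ^ kk m \<noteq> 1" using z k0 k1 unfolding primitive_root_of_unity_def by blast
  have "absv z = 1" using av_root_unity z m unfolding primitive_root_of_unity_def by auto
  then show "absv (1 - z ^ kk m) \<le> af m"
  proof (cases "p dvd m")
    case True
    have "primitive_root_of_unity p (z ^ (m div p))" using prim_pow_prim[OF z True p0] m by simp
    then show ?thesis using True ap_eq unfolding af_def eps_def kk_def by simp
  next
    case False
    then show ?thesis unfolding af_def eps_def kk_def using av_one_minus_le \<open>absv z = 1\<close> by simp
  qed
qed

end

definition Sm :: "'k::field \<Rightarrow> 'k m2" where "Sm z = (z, 0, 0, 1)"
definition Tm :: "'k::field \<Rightarrow> 'k \<Rightarrow> 'k m2" where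
  "Tm l f = (l * f - 1, l * (1 - f), f - 1, l - f)"

fun mv :: "'k::comm_ring_1 m2 \<Rightarrow> 'k \<times> 'k \<Rightarrow> 'k \<times> 'k" where
  "mv (a, b, c, d) (x, y) = (a * x + b * y, c * x + d * y)"

lemma mv_mult: "mv (m2_mult M N) v = mv M (mv N v)"
  by (cases M rule: prod_cases4; cases N rule: prod_cases4; cases v) (simp add: algebra_simps)
lemma mv_id[simp]: "mv m2_id v = v"
  by (cases v) (simp add: m2_id_def)
lemma mv_smult: "mv (m2_smult c M) (x, y) = (c * fst (mv M (x, y)), c * snd (mv M (x, y)))"
  by (cases M rule: prod_cases4) (simp add: algebra_simps)

lemma Sm_mult: "m2_mult (Sm a) (Sm b) = Sm (a * b)" by (simp add: Sm_def)
lemma Sm_pow: "m2_pow (Sm z) k = Sm (z ^ k)"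
  by (induction k) (auto simp: m2_pow_Suc Sm_mult Sm_def m2_id_def)
lemma Sm_det: "m2_det (Sm z) = z" by (simp add: Sm_def)

lemma Tm_mult: "m2_mult (Tm l a) (Tm l b) = m2_smult (l - 1) (Tm l (a * b))"
  by (simp add: Tm_def algebra_simps)
lemma Tm_pow: "0 < k \<Longrightarrow> m2_pow (Tm l f) k = m2_smult ((l - 1) ^ (k - 1)) (Tm l (f ^ k))"
proof (induction k)
  case (Suc k)
  show ?case
  proof (cases "k = 0")
    case True then show ?thesis by (simp add: m2_pow_def)
  next
    case False
    then have "m2_pow (Tm l f) (Suc k) = m2_mult (Tm l f) (m2_smult ((l - 1) ^ (k - 1)) (Tm l (f ^ k)))"
      using Suc by (simp add: m2_pow_Suc)
    also have "\<dots> = m2_smult ((l - 1) ^ (k - 1) * (l - 1)) (Tm l (f * f ^ k))"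
      by (simp add: m2_smult_mult_right Tm_mult m2_smult_smult)
    also have "(l - 1) ^ (k - 1) * (l - 1) = (l - 1) ^ (Suc k - 1)"
      using False by (cases k) (auto simp: mult.commute)
    finally show ?thesis by simp
  qed
qed simp
lemma Tm_det: "m2_det (Tm l f) = (l - 1)^2 * f"
  by (simp add: Tm_def algebra_simps power2_eq_square)

lemma proj_eq_id_iff: "proj_eq (M::'k::field m2) m2_id \<longleftrightarrow> (\<exists>x. x \<noteq> 0 \<and> M = (x, 0, 0, x))"
  by (simp add: proj_eq_def m2_id_def)

lemma Sm_proj_id: "proj_eq (Sm z) m2_id \<longleftrightarrow> z = 1"
  by (auto simp: proj_eq_id_iff Sm_def)
lemma Tm_proj_id: "(l::'k::field) \<noteq> 1 \<Longrightarrow> proj_eq (Tm l f) m2_id \<longleftrightarrow> f = 1"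
  by (auto simp: proj_eq_id_iff Tm_def)

lemma proj_eq_smult_left_iff: "(c::'k::field) \<noteq> 0 \<Longrightarrow> proj_eq (m2_smult c M) N \<longleftrightarrow> proj_eq M N"
  using proj_eq_smult proj_eq_smult' proj_eq_trans by metis

lemma Sm_order: "0 < m \<Longrightarrow> pgl_has_order (Sm z) m \<longleftrightarrow> primitive_root_of_unity m z"
  by (simp add: pgl_has_order_def Sm_pow Sm_proj_id primitive_root_of_unity_def)

lemma Tm_pow_proj: "(l::'k::field) \<noteq> 1 \<Longrightarrow> 0 < k \<Longrightarrow> proj_eq (m2_pow (Tm l f) k) m2_id \<longleftrightarrow> f ^ k = 1"
  by (simp add: Tm_pow proj_eq_smult_left_iff Tm_proj_id)

lemma Tm_order: "(l::'k::field) \<noteq> 1 \<Longrightarrow> 0 < n \<Longrightarrow> pgl_has_order (Tm l f) n \<longleftrightarrow> primitive_root_of_unity n f"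
  by (simp add: pgl_has_order_def Tm_pow_proj primitive_root_of_unity_def)

lemma Sm_fixed: "(z::'k::field) \<noteq> 1 \<Longrightarrow> fixed_points (Sm z) = {Some 0, None}"
proof -
  assume z: "z \<noteq> 1"
  have "mobius (Sm z) w = w \<longleftrightarrow> w = Some 0 \<or> w = None" for w
  proof (cases w)
    case (Some x)
    then show ?thesis using z by (auto simp: Sm_def)
  qed (simp add: Sm_def)
  then show ?thesis unfolding fixed_points_def by auto
qed

lemma Tm_fixed:
  fixes l f :: "'k::field"
  assumes l: "l \<noteq> 1" and f: "f \<noteq> 1" "f \<noteq> 0"
  shows "fixed_points (Tm l f) = {Some 1, Some l}"
proof -
  have "mobius (Tm l f) w = w \<longleftrightarrow> w = Some 1 \<or> w = Some l" for w
  proof (cases w)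
    case None
    then show ?thesis using f by (simp add: Tm_def)
  next
    case (Some x)
    have key: "(l * f - 1) * x + l * (1 - f) = x * ((f - 1) * x + (l - f)) \<longleftrightarrow> x = 1 \<or> x = l"
    proof -
      have "(l * f - 1) * x + l * (1 - f) - x * ((f - 1) * x + (l - f)) = - (f - 1) * ((x - 1) * (x - l))"
        by (simp add: algebra_simps)
      then have "(l * f - 1) * x + l * (1 - f) = x * ((f - 1) * x + (l - f)) \<longleftrightarrow> (x - 1) * (x - l) = 0"
        using f by (metis eq_iff_diff_eq_0 mult_eq_0_iff neg_equal_0_iff_equal right_minus_eq)
      then show ?thesis by simp
    qed
    have d1: "(f - 1) * 1 + (l - f) \<noteq> 0" using l by simp
    have d2: "(f - 1) * l + (l - f) \<noteq> 0"
    proof -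
      have "(f - 1) * l + (l - f) = f * (l - 1)" by (simp add: algebra_simps)
      then show ?thesis using l f by simp
    qed
    show ?thesis
    proof
      assume "mobius (Tm l f) w = w"
      then have "(f - 1) * x + (l - f) \<noteq> 0 \<and> ((l * f - 1) * x + l * (1 - f)) / ((f - 1) * x + (l - f)) = x"
        using Some by (auto simp: Tm_def split: if_splits)
      then have "(l * f - 1) * x + l * (1 - f) = x * ((f - 1) * x + (l - f))"
        by (simp add: divide_eq_eq)
      then show "w = Some 1 \<or> w = Some l" using key Some by simp
    next
      assume "w = Some 1 \<or> w = Some l"
      then have x: "x = 1 \<or> x = l" using Some by simp
      then have eq: "(l * f - 1) * x + l * (1 - f) = x * ((f - 1) * x + (l - f))" using key by simp
      have ne: "(f - 1) * x + (l - f) \<noteq> 0" using x d1 d2 by auto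
      show "mobius (Tm l f) w = w" using Some eq ne by (simp add: Tm_def divide_eq_eq)
    qed
  qed
  then show ?thesis unfolding fixed_points_def by auto
qed


lemma eval_word_Nil[simp]: "eval_word s t [] = m2_id" by (simp add: eval_word_def)
lemma eval_word_Cons[simp]: "eval_word s t ((b, k) # w) = m2_mult (m2_pow (if b then s else t) k) (eval_word s t w)"
  by (simp add: eval_word_def)

lemma reduced_Nil[simp]: "reduced_word m n []" by (simp add: reduced_word_def)

lemma reduced_Cons:
  "reduced_word m n ((b, k) # w) \<longleftrightarrow>
     0 < k \<and> k < (if b then m else n) \<and> reduced_word m n w \<and> (w \<noteq> [] \<longrightarrow> fst (hd w) \<noteq> b)"
proof
  assume r: "reduced_word m n ((b, k) # w)"
  have "0 < snd (((b, k) # w) ! 0) \<and> snd (((b, k) # w) ! 0) < (if fst (((b, k) # w) ! 0) then m else n)"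
    using r unfolding reduced_word_def by (meson length_greater_0_conv list.discI)
  then have 1: "0 < k \<and> k < (if b then m else n)" by simp
  have 2: "reduced_word m n w" unfolding reduced_word_def
  proof (rule conjI; intro allI impI)
    fix i assume "i < length w"
    then have "Suc i < length ((b, k) # w)" by simp
    then show "0 < snd (w ! i) \<and> snd (w ! i) < (if fst (w ! i) then m else n)"
      using r unfolding reduced_word_def by (metis nth_Cons_Suc)
  next
    fix i assume "Suc i < length w"
    then have "Suc (Suc i) < length ((b, k) # w)" by simp
    then show "fst (w ! i) \<noteq> fst (w ! Suc i)"
      using r unfolding reduced_word_def by (metis nth_Cons_Suc)
  qed
  have 3: "w \<noteq> [] \<longrightarrow> fst (hd w) \<noteq> b"
  proof
    assume "w \<noteq> []"
    then have "Suc 0 < length ((b, k) # w)" by (cases w) auto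
    then have "fst (((b, k) # w) ! 0) \<noteq> fst (((b, k) # w) ! Suc 0)" using r unfolding reduced_word_def by blast
    then show "fst (hd w) \<noteq> b" using \<open>w \<noteq> []\<close> by (cases w) auto
  qed
  show "0 < k \<and> k < (if b then m else n) \<and> reduced_word m n w \<and> (w \<noteq> [] \<longrightarrow> fst (hd w) \<noteq> b)"
    using 1 2 3 by blast
next
  assume h: "0 < k \<and> k < (if b then m else n) \<and> reduced_word m n w \<and> (w \<noteq> [] \<longrightarrow> fst (hd w) \<noteq> b)"
  show "reduced_word m n ((b, k) # w)" unfolding reduced_word_def
  proof (rule conjI; intro allI impI)
    fix i assume "i < length ((b, k) # w)"
    then show "0 < snd (((b, k) # w) ! i) \<and> snd (((b, k) # w) ! i) < (if fst (((b, k) # w) ! i) then m else n)"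
      using h unfolding reduced_word_def by (cases i) auto
  next
    fix i assume i: "Suc i < length ((b, k) # w)"
    show "fst (((b, k) # w) ! i) \<noteq> fst (((b, k) # w) ! Suc i)"
    proof (cases i)
      case 0
      then show ?thesis using h i by (cases w) auto
    next
      case (Suc j)
      then show ?thesis using h i unfolding reduced_word_def by auto
    qed
  qed
qed

lemma pingpong_word:
  fixes s t :: "'k::field m2"
  assumes map: "\<And>b k u. 0 < k \<Longrightarrow> k < (if b then m else n) \<Longrightarrow> u \<in> src b \<Longrightarrow>
                   mv (m2_pow (if b then s else t) k) u \<in> src (\<not> b)"
  shows "reduced_word m n w \<Longrightarrow> w \<noteq> [] \<Longrightarrow> v \<in> src (fst (last w)) \<Longrightarrow>
    \<exists>u \<in> src (fst (hd w)). mv (eval_word s t w) v = mv (m2_pow (if fst (hd w) then s else t) (snd (hd w))) u"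
proof (induction w)
  case (Cons x w)
  obtain b k where x: "x = (b, k)" by (cases x)
  show ?case
  proof (cases "w = []")
    case True
    then show ?thesis using Cons.prems x by (auto simp: eval_word_def)
  next
    case False
    have r: "0 < k" "k < (if b then m else n)" "reduced_word m n w" "fst (hd w) \<noteq> b"
      using Cons.prems(1) False unfolding x reduced_Cons by auto
    have "v \<in> src (fst (last w))" using Cons.prems False by simp
    from Cons.IH[OF r(3) False this] obtain u where
      u: "u \<in> src (fst (hd w))" "mv (eval_word s t w) v = mv (m2_pow (if fst (hd w) then s else t) (snd (hd w))) u"
      by blast
    have r2: "0 < snd (hd w)" "snd (hd w) < (if fst (hd w) then m else n)"
      using r(3) False unfolding reduced_word_def by (metis hd_conv_nth length_greater_0_conv)+
    have "mv (eval_word s t w) v \<in> src (\<not> fst (hd w))" using map[OF r2 u(1)] u(2) by simp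
    moreover have "(\<not> fst (hd w)) = b" using r(4) by blast
    ultimately have "mv (eval_word s t w) v \<in> src b" by simp
    then show ?thesis using x by (auto simp: mv_mult)
  qed
qed simp

lemma adj_proj_pow:
  fixes M :: "'k::field m2"
  assumes det: "m2_det M \<noteq> 0" and m: "0 < m" and o: "proj_eq (m2_pow M m) m2_id"
  shows "proj_eq (m2_adj M) (m2_pow M (m - 1))"
proof -
  obtain m' where m': "m = Suc m'" using m by (cases m) auto
  have "m2_mult (m2_adj M) (m2_pow M m) = m2_mult (m2_mult (m2_adj M) M) (m2_pow M m')"
    unfolding m' m2_pow_Suc m2_mult_assoc ..
  also have "\<dots> = m2_smult (m2_det M) (m2_pow M (m - 1))"
    unfolding m2_adj_mult m2_smult_mult_left m' by simp
  finally have "m2_mult (m2_adj M) (m2_pow M m) = m2_smult (m2_det M) (m2_pow M (m - 1))" .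
  moreover have "proj_eq (m2_mult (m2_adj M) (m2_pow M m)) (m2_mult (m2_adj M) m2_id)"
    by (rule proj_eq_mult[OF proj_eq_refl o])
  ultimately have "proj_eq (m2_smult (m2_det M) (m2_pow M (m - 1))) (m2_adj M)" by simp
  then show ?thesis using det proj_eq_smult_left_iff proj_eq_sym by blast
qed

lemma prepend_word:
  fixes s t :: "'k::field m2"
  assumes os: "proj_eq (m2_pow s m) m2_id" and ot: "proj_eq (m2_pow t n) m2_id"
    and r: "reduced_word m n w" and a: "0 < a" "a < (if b then m else n)"
  shows "\<exists>w'. reduced_word m n w' \<and> proj_eq (m2_mult (m2_pow (if b then s else t) a) (eval_word s t w)) (eval_word s t w')"
proof (cases w)
  case Nil
  then show ?thesis using a by (intro exI[of _ "[(b, a)]"]) (simp add: reduced_Cons)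
next
  case (Cons x w2)
  obtain b' k where x: "x = (b', k)" by (cases x)
  have r2: "0 < k" "k < (if b' then m else n)" "reduced_word m n w2" "w2 \<noteq> [] \<longrightarrow> fst (hd w2) \<noteq> b'"
    using r unfolding Cons x reduced_Cons by auto
  define M where "M = (if b then s else t)"
  define od where "od = (if b then m else n)"
  have oM: "proj_eq (m2_pow M od) m2_id" using os ot unfolding M_def od_def by simp
  show ?thesis
  proof (cases "b' = b")
    case False
    then show ?thesis using a r Cons x
      by (intro exI[of _ "(b, a) # w"]) (auto simp: reduced_Cons)
  next
    case True
    have ev: "m2_mult (m2_pow M a) (eval_word s t w) = m2_mult (m2_pow M (a + k)) (eval_word s t w2)"
      using Cons x True by (simp add: M_def m2_pow_add m2_mult_assoc)
    consider "a + k = od" | "a + k < od" | "od < a + k" by linarith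
    then show ?thesis
    proof cases
      case 1
      have "proj_eq (m2_mult (m2_pow M (a + k)) (eval_word s t w2)) (m2_mult m2_id (eval_word s t w2))"
        using 1 oM by (intro proj_eq_mult) auto
      then show ?thesis using ev r2 by (intro exI[of _ w2]) (simp add: M_def)
    next
      case 2
      then show ?thesis using ev r2 True a unfolding od_def
        by (intro exI[of _ "(b, a + k) # w2"]) (simp add: reduced_Cons M_def)
    next
      case 3
      have "m2_pow M (a + k) = m2_mult (m2_pow M od) (m2_pow M (a + k - od))"
        using 3 by (simp add: m2_pow_add[symmetric])
      then have "proj_eq (m2_mult (m2_pow M (a + k)) (eval_word s t w2))
                   (m2_mult (m2_mult m2_id (m2_pow M (a + k - od))) (eval_word s t w2))"
        using proj_eq_mult[OF proj_eq_mult[OF oM proj_eq_refl] proj_eq_refl] by simp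
      moreover have "reduced_word m n ((b, a + k - od) # w2)"
        using 3 r2 True a unfolding od_def by (auto simp: reduced_Cons)
      ultimately show ?thesis using ev
        by (intro exI[of _ "(b, a + k - od) # w2"]) (simp add: M_def)
    qed
  qed
qed

lemma normal_form:
  fixes s t :: "'k::field m2"
  assumes ds: "m2_det s \<noteq> 0" and dt: "m2_det t \<noteq> 0"
    and m: "2 \<le> m" and n: "2 \<le> n"
    and os: "proj_eq (m2_pow s m) m2_id" and ot: "proj_eq (m2_pow t n) m2_id"
  shows "set ws \<subseteq> {s, t, m2_adj s, m2_adj t} \<Longrightarrow> \<exists>w. reduced_word m n w \<and> proj_eq (m2_prod ws) (eval_word s t w)"
proof (induction ws)
  case Nil
  then show ?case by (intro exI[of _ "[]"]) simp
next
  case (Cons x ws)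
  then obtain w where w: "reduced_word m n w" "proj_eq (m2_prod ws) (eval_word s t w)" by auto
  have "\<exists>b a. 0 < a \<and> a < (if b then m else n) \<and> proj_eq x (m2_pow (if b then s else t) a)"
  proof -
    have "x = s \<or> x = t \<or> x = m2_adj s \<or> x = m2_adj t" using Cons.prems by auto
    then show ?thesis
    proof (elim disjE)
      assume "x = s" then show ?thesis using m by (intro exI[of _ True] exI[of _ 1]) auto
    next
      assume "x = t" then show ?thesis using n by (intro exI[of _ False] exI[of _ 1]) auto
    next
      assume "x = m2_adj s" then show ?thesis using m adj_proj_pow[OF ds _ os]
        by (intro exI[of _ True] exI[of _ "m - 1"]) auto
    next
      assume "x = m2_adj t" then show ?thesis using n adj_proj_pow[OF dt _ ot]
        by (intro exI[of _ False] exI[of _ "n - 1"]) auto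
    qed
  qed
  then obtain b a where ba: "0 < a" "a < (if b then m else n)" "proj_eq x (m2_pow (if b then s else t) a)" by blast
  obtain w' where w': "reduced_word m n w'"
     "proj_eq (m2_mult (m2_pow (if b then s else t) a) (eval_word s t w)) (eval_word s t w')"
    using prepend_word[OF os ot w(1) ba(1,2)] by blast
  have "proj_eq (m2_prod (x # ws)) (m2_mult (m2_pow (if b then s else t) a) (eval_word s t w))"
    using ba(3) w(2) by (simp add: proj_eq_mult)
  then show ?case using w' proj_eq_trans by blast
qed


lemma mv_Sm: "mv (Sm w) (x, y) = (w * x, y)" by (simp add: Sm_def)
lemma mv_Tm: "mv (Tm l f) (x, y) = ((l * f - 1) * x + l * (1 - f) * y, (f - 1) * x + (l - f) * y)"
  by (simp add: Tm_def)

context padic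
begin

lemma av_unit_close: "absv (d - 1) < 1 \<Longrightarrow> absv d = 1"
proof -
  assume h: "absv (d - 1) < 1"
  have "absv ((d - 1) + 1) = absv (1::'k)" by (rule av_strict) (use h in simp)
  then show ?thesis by simp
qed

lemma Tm_PQ:
  fixes l f x y :: 'k
  assumes "mv (Tm l f) (x, y) = (P, Q)"
  shows "P - Q = f * (l - 1) * (x - y)" "Q = (f - 1) * (x - y) + (l - 1) * y"
proof -
  have P: "P = (l * f - 1) * x + l * (1 - f) * y" and Q: "Q = (f - 1) * x + (l - f) * y"
    using assms by (auto simp: mv_Tm)
  show "P - Q = f * (l - 1) * (x - y)" unfolding P Q by algebra
  show "Q = (f - 1) * (x - y) + (l - 1) * y" unfolding Q by algebra
qed

lemma construction:
  fixes z e l :: 'k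
  assumes z: "primitive_root_of_unity m z" and e: "primitive_root_of_unity n e"
    and m: "2 \<le> m" and n: "2 \<le> n" and l: "l \<noteq> 1"
    and small: "absv (l - 1) < af m * af n"
  shows "m2_det (Sm z) \<noteq> 0 \<and> m2_det (Tm l e) \<noteq> 0 \<and>
          pgl_has_order (Sm z) m \<and> pgl_has_order (Tm l e) n \<and>
          fixed_points (Sm z) = {Some 0, None} \<and>
          fixed_points (Tm l e) = {Some 1, Some l} \<and>
          free_product_via m n (Sm z) (Tm l e) \<and>
          pgl_discrete absv (gen_group (Sm z) (Tm l e))"
proof -
  define s where "s = Sm z"
  define t where "t = Tm l e"
  define \<delta> where "\<delta> = absv (l - 1)"
  define \<rho> where "\<rho> = \<delta> / af n"
  have m0: "0 < m" and n0: "0 < n" using m n by auto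
  have afm: "0 < af m" "af m \<le> 1" using af_props[OF z m0] by auto
  have afn: "0 < af n" "af n \<le> 1" using af_props[OF e n0] by auto
  have dpos: "0 < \<delta>" using l av_pos unfolding \<delta>_def by simp
  have rho_af: "\<rho> * af n = \<delta>" unfolding \<rho>_def using afn by simp
  have d_le_rho: "\<delta> \<le> \<rho>" unfolding \<rho>_def using afn dpos by (simp add: le_divide_eq)
  have rho_pos: "0 < \<rho>" using dpos d_le_rho by linarith
  have rho_lt: "\<rho> < af m" unfolding \<rho>_def using afn small unfolding \<delta>_def by (simp add: divide_less_eq)
  have rho1: "\<rho> < 1" using rho_lt afm by linarith
  have d1: "\<delta> < 1" using d_le_rho rho1 by linarith
  have z0: "z \<noteq> 0"
  proof assume "z = 0" with z m0 show False by (cases m) (auto simp: primitive_root_of_unity_def) qed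
  have e0: "e \<noteq> 0"
  proof assume "e = 0" with e n0 show False by (cases n) (auto simp: primitive_root_of_unity_def) qed
  have "z ^ 1 \<noteq> 1" using z m unfolding primitive_root_of_unity_def by auto
  then have z1: "z \<noteq> 1" by auto
  have "e ^ 1 \<noteq> 1" using e n unfolding primitive_root_of_unity_def by auto
  then have e1: "e \<noteq> 1" by auto
  have az: "absv z = 1" using av_root_unity z m0 unfolding primitive_root_of_unity_def by blast
  have ae: "absv e = 1" using av_root_unity e n0 unfolding primitive_root_of_unity_def by blast
  define Xs where "Xs = {(x, y). (x, y) \<noteq> (0::'k, 0::'k) \<and> absv (x - y) > \<rho> * absv y}"
  define Ys where "Ys = {(x, y). (x, y) \<noteq> (0::'k, 0::'k) \<and> absv (x - y) \<le> \<rho> * absv y}"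
  define src where "src b = (if b then Ys else Xs)" for b
  have XY: "v \<in> Xs \<Longrightarrow> v \<notin> Ys" for v unfolding Xs_def Ys_def by auto
  have sc: "c \<noteq> 0 \<Longrightarrow> absv (c * x - c * y) = absv c * absv (x - y) \<and> \<rho> * absv (c * y) = absv c * (\<rho> * absv y)" for c x y :: 'k
    by (simp add: right_diff_distrib[symmetric] av_mult)
  have coneX: "c \<noteq> 0 \<Longrightarrow> (c * x, c * y) \<in> Xs \<longleftrightarrow> (x, y) \<in> Xs" for c x y
    unfolding Xs_def using sc[of c x y] av_pos[of c] rho_pos by auto
  have coneY: "c \<noteq> 0 \<Longrightarrow> (c * x, c * y) \<in> Ys \<longleftrightarrow> (x, y) \<in> Ys" for c x y
    unfolding Ys_def using sc[of c x y] av_pos[of c] rho_pos by auto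
  have Yy: "(x, y) \<in> Ys \<Longrightarrow> y \<noteq> 0 \<and> absv x = absv y" for x y
  proof -
    assume h: "(x, y) \<in> Ys"
    then have y0: "y \<noteq> 0" unfolding Ys_def using av_pos[of x] by auto
    have "absv (x - y) \<le> \<rho> * absv y" using h unfolding Ys_def by auto
    also have "\<dots> < absv y" using rho1 av_pos[OF y0] by simp
    finally have "absv ((x - y) + y) = absv y" by (rule av_strict)
    then show ?thesis using y0 by simp
  qed
  have P1: "mv (m2_pow s k) u \<in> Xs" if k: "0 < k" "k < m" and u: "u \<in> Ys" for k u
  proof -
    obtain x y where u': "u = (x, y)" by (cases u)
    have y0: "y \<noteq> 0" using Yy u u' by blast
    define w where "w = z ^ k"
    have aw: "absv w = 1" unfolding w_def by (simp add: av_power az)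
    have low: "af m \<le> absv (w - 1)" using af_lower[OF z m0 k] unfolding w_def by (simp add: av_diff_sym)
    have "absv (w * (x - y)) = absv (x - y)" by (simp add: av_mult aw)
    also have "\<dots> \<le> \<rho> * absv y" using u u' unfolding Ys_def by auto
    also have "\<dots> < af m * absv y" using rho_lt av_pos[OF y0] by simp
    also have "\<dots> \<le> absv ((w - 1) * y)" using low by (simp add: av_mult mult_right_mono)
    finally have "absv (w * (x - y) + (w - 1) * y) = absv ((w - 1) * y)" by (rule av_strict)
    moreover have "w * (x - y) + (w - 1) * y = w * x - y" by algebra
    ultimately have "absv (w * x - y) = absv (w - 1) * absv y" by (simp add: av_mult)
    moreover have "af m * absv y > \<rho> * absv y" using rho_lt av_pos[OF y0] by simp
    moreover have "af m * absv y \<le> absv (w - 1) * absv y" using low by (simp add: mult_right_mono)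
    ultimately have "absv (w * x - y) > \<rho> * absv y" by linarith
    then show ?thesis using u' y0 unfolding s_def Sm_pow Xs_def w_def by (simp add: mv_Sm)
  qed
  have TQ: "absv (P - Q) = \<delta> * absv (x - y) \<and> absv Q \<le> absv (x - y) \<and> af n * absv (x - y) \<le> absv Q"
    if k: "0 < k" "k < n" and u: "(x, y) \<in> Xs" and PQ: "mv (Tm l (e ^ k)) (x, y) = (P, Q)" for k x y P Q
  proof -
    define f where "f = e ^ k"
    have af: "absv f = 1" unfolding f_def by (simp add: av_power ae)
    have low: "af n \<le> absv (f - 1)" using af_lower[OF e n0 k] unfolding f_def by (simp add: av_diff_sym)
    have f1: "absv (f - 1) \<le> 1" using av_one_minus_le[OF af] by (simp add: av_diff_sym)
    have PQ': "P - Q = f * (l - 1) * (x - y)" "Q = (f - 1) * (x - y) + (l - 1) * y"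
      using Tm_PQ[OF PQ[folded f_def]] by auto
    have xy: "\<rho> * absv y < absv (x - y)" using u unfolding Xs_def by auto
    have ly: "absv ((l - 1) * y) < af n * absv (x - y)"
    proof -
      have "absv ((l - 1) * y) = \<delta> * absv y" by (simp add: av_mult \<delta>_def)
      also have "\<dots> = af n * (\<rho> * absv y)" using rho_af by (simp add: algebra_simps)
      also have "\<dots> < af n * absv (x - y)" using xy afn by simp
      finally show ?thesis .
    qed
    have "af n * absv (x - y) \<le> absv ((f - 1) * (x - y))" using low by (simp add: av_mult mult_right_mono)
    then have "absv ((l - 1) * y) < absv ((f - 1) * (x - y))" using ly by linarith
    then have Qeq: "absv Q = absv (f - 1) * absv (x - y)"
      using av_strict' PQ'(2) by (simp add: av_mult)
    show ?thesis
    proof (intro conjI)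
      show "absv (P - Q) = \<delta> * absv (x - y)" using PQ'(1) af by (simp add: av_mult \<delta>_def)
      show "absv Q \<le> absv (x - y)" using Qeq f1 by (simp add: mult_left_le_one_le)
      show "af n * absv (x - y) \<le> absv Q" using Qeq low by (simp add: mult_right_mono)
    qed
  qed
  have Tpow: "mv (m2_pow t k) (x, y) = ((l - 1) ^ (k - 1) * fst (mv (Tm l (e ^ k)) (x, y)),
                                         (l - 1) ^ (k - 1) * snd (mv (Tm l (e ^ k)) (x, y)))"
    if "0 < k" for k x y
    unfolding t_def Tm_pow[OF that] mv_smult ..
  have P2: "mv (m2_pow t k) u \<in> Ys" if k: "0 < k" "k < n" and u: "u \<in> Xs" for k u
  proof -
    obtain x y where u': "u = (x, y)" by (cases u)
    obtain P Q where PQ: "mv (Tm l (e ^ k)) (x, y) = (P, Q)" by (cases "mv (Tm l (e ^ k)) (x, y)")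
    have T: "absv (P - Q) = \<delta> * absv (x - y)" "af n * absv (x - y) \<le> absv Q"
      using TQ[OF k u[unfolded u'] PQ] by auto
    have "0 \<le> \<rho> * absv y" using rho_pos by simp
    then have xy: "0 < absv (x - y)" using u u' unfolding Xs_def by auto
    have "0 < af n * absv (x - y)" using xy afn by simp
    then have "0 < absv Q" using T(2) by linarith
    then have Q0: "Q \<noteq> 0" by auto
    have "absv (P - Q) = \<rho> * (af n * absv (x - y))" using T(1) rho_af by (simp add: algebra_simps)
    also have "\<dots> \<le> \<rho> * absv Q" using T(2) d_le_rho dpos by (simp add: mult_left_mono)
    finally have "(P, Q) \<in> Ys" unfolding Ys_def using Q0 by simp
    moreover have "(l - 1) ^ (k - 1) \<noteq> 0" using l by simp
    ultimately show ?thesis using coneY u' PQ Tpow[OF k(1)] by simp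
  qed
  have map: "mv (m2_pow (if b then s else t) k) u \<in> src (\<not> b)"
    if "0 < k" "k < (if b then m else n)" "u \<in> src b" for b k u
    using that P1 P2 unfolding src_def by (cases b) auto
  have key: False
    if w: "reduced_word m n w" "w \<noteq> []" and N: "proj_eq (a, b, c, d) (eval_word s t w)"
      and close: "absv (a - 1) < \<delta>" "absv b < \<delta>" "absv c < \<delta>" "absv (d - 1) < \<delta>" for w a b c d
  proof -
    obtain \<kappa> where \<kappa>: "\<kappa> \<noteq> 0" "(a, b, c, d) = m2_smult \<kappa> (eval_word s t w)"
      using N unfolding proj_eq_def by blast
    have mvN: "mv (a, b, c, d) (x, y) = (\<kappa> * fst (mv (eval_word s t w) (x, y)), \<kappa> * snd (mv (eval_word s t w) (x, y)))" for x y
      unfolding \<kappa>(2) mv_smult ..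
    have ad: "absv d = 1" using close(4) d1 av_unit_close by simp
    have cd: "absv (c + d) = 1" using av_strict[of c d] close(3) d1 ad by simp
    have diff: "absv ((a + b) - (c + d)) < \<delta>"
    proof -
      have eq: "(a + b) - (c + d) = ((a - 1) + b) - (c + (d - 1))" by simp
      have "absv ((a - 1) + b) < \<delta>" using close by (intro av_add_less) auto
      have "absv (c + (d - 1)) < \<delta>" using close by (intro av_add_less) auto
      then show ?thesis using av_diff_less[of "(a - 1) + b" \<delta> "c + (d - 1)"] \<open>absv ((a - 1) + b) < \<delta>\<close>
        unfolding eq by blast
    qed
    have bd: "absv (b - d) = 1"
    proof -
      have "absv (b + (- d)) = absv (- d)" using close(2) d1 ad by (intro av_strict) auto
      then show ?thesis using ad by simp
    qed
    define b0 where "b0 = fst (hd w)"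
    define k0 where "k0 = snd (hd w)"
    have k0: "0 < k0" "k0 < (if b0 then m else n)"
      using w unfolding reduced_word_def b0_def k0_def by (metis hd_conv_nth length_greater_0_conv)+
    have pp: "\<exists>u \<in> src b0. mv (eval_word s t w) v = mv (m2_pow (if b0 then s else t) k0) u"
      if "v \<in> src (fst (last w))" for v
      using pingpong_word[where src=src, OF map w(1,2) that] unfolding b0_def k0_def by blast
    have v11: "(1, 1) \<in> Ys" unfolding Ys_def using rho_pos by simp
    have v01: "(0, 1) \<in> Xs" unfolding Xs_def using rho1 by simp
    show False
    proof (cases "fst (last w)")
      case True
      then have "(1, 1) \<in> src (fst (last w))" using v11 by (simp add: src_def)
      from pp[OF this] obtain u where u: "u \<in> src b0" "mv (eval_word s t w) (1, 1) = mv (m2_pow (if b0 then s else t) k0) u"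
        by blast
      obtain X Y where XY: "mv (eval_word s t w) (1, 1) = (X, Y)" by (cases "mv (eval_word s t w) (1, 1)")
      have N11: "(a + b, c + d) = (\<kappa> * X, \<kappa> * Y)" using mvN[of 1 1] XY by simp
      show False
      proof (cases b0)
        case True
        then have "(X, Y) \<in> Xs" using map[OF k0, of u] u XY unfolding src_def by simp
        then have "(a + b, c + d) \<in> Xs" using N11 coneX \<kappa>(1) by simp
        then show False using diff d_le_rho cd unfolding Xs_def by simp
      next
        case False
        obtain x y where uxy: "u = (x, y)" by (cases u)
        have ux: "(x, y) \<in> Xs" using u(1) False uxy unfolding src_def by simp
        obtain P Q where PQ: "mv (Tm l (e ^ k0)) (x, y) = (P, Q)" by (cases "mv (Tm l (e ^ k0)) (x, y)")
        have kk0: "0 < k0" "k0 < n" using k0 False by auto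
        have T: "absv (P - Q) = \<delta> * absv (x - y)" "absv Q \<le> absv (x - y)"
          using TQ[OF kk0 ux PQ] by auto
        define \<mu> where "\<mu> = \<kappa> * (l - 1) ^ (k0 - 1)"
        have XY': "X = (l - 1) ^ (k0 - 1) * P" "Y = (l - 1) ^ (k0 - 1) * Q"
          using u(2) XY False Tpow[OF kk0(1), of x y] PQ uxy by auto
        have ab: "a + b = \<mu> * P" "c + d = \<mu> * Q" using N11 XY' unfolding \<mu>_def by (auto simp: algebra_simps)
        have "\<delta> * absv (c + d) \<le> absv ((a + b) - (c + d))"
        proof -
          have "\<delta> * absv (c + d) = absv \<mu> * (\<delta> * absv Q)" using ab by (simp add: av_mult algebra_simps)
          also have "\<dots> \<le> absv \<mu> * (\<delta> * absv (x - y))" using T(2) dpos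
            by (simp add: mult_left_mono)
          also have "\<dots> = absv ((a + b) - (c + d))" using ab T(1) by (simp add: av_mult right_diff_distrib[symmetric])
          finally show ?thesis .
        qed
        then show False using diff cd by simp
      qed
    next
      case False
      then have "(0, 1) \<in> src (fst (last w))" using v01 by (simp add: src_def)
      from pp[OF this] obtain u where u: "u \<in> src b0" "mv (eval_word s t w) (0, 1) = mv (m2_pow (if b0 then s else t) k0) u"
        by blast
      obtain X Y where XY: "mv (eval_word s t w) (0, 1) = (X, Y)" by (cases "mv (eval_word s t w) (0, 1)")
      have N01: "(b, d) = (\<kappa> * X, \<kappa> * Y)" using mvN[of 0 1] XY by simp
      show False
      proof (cases b0)
        case False
        then have "(X, Y) \<in> Ys" using map[OF k0, of u] u XY unfolding src_def by simp
        then have "(b, d) \<in> Ys" using N01 coneY \<kappa>(1) by simp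
        then show False using bd ad rho1 unfolding Ys_def by simp
      next
        case True
        obtain x y where uxy: "u = (x, y)" by (cases u)
        have uy: "(x, y) \<in> Ys" using u(1) True uxy unfolding src_def by simp
        have "(X, Y) = (z ^ k0 * x, y)" using u(2) XY True uxy unfolding s_def Sm_pow by (simp add: mv_Sm Sm_pow)
        then have "absv X = absv Y" using Yy[OF uy] az by (simp add: av_mult av_power)
        then have "absv b = absv d" using N01 by (simp add: av_mult)
        then show False using ad close(2) d1 by simp
      qed
    qed
  qed
  have ds: "m2_det s \<noteq> 0" unfolding s_def Sm_det using z0 .
  have dt: "m2_det t \<noteq> 0" unfolding t_def Tm_det using l e0 by simp
  have os: "pgl_has_order s m" unfolding s_def using Sm_order[OF m0, of z] z by blast
  have ot: "pgl_has_order t n" unfolding t_def using Tm_order[OF l n0, of e] e by blast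
  have free: "free_product_via m n s t"
    unfolding free_product_via_def
  proof (intro conjI os ot allI impI notI)
    fix w assume w: "w \<noteq> [] \<and> reduced_word m n w" and p: "proj_eq (eval_word s t w) m2_id"
    have "proj_eq (1, 0, 0, 1) (eval_word s t w)" using proj_eq_sym[OF p] by (simp add: m2_id_def)
    then show False using key[of w 1 0 0 1] w dpos by simp
  qed
  have disc: "pgl_discrete absv (gen_group s t)"
    unfolding pgl_discrete_def
  proof (intro exI[of _ \<delta>] conjI dpos ballI allI impI)
    fix g a b c d
    assume g: "g \<in> gen_group s t"
      and h: "proj_eq (a, b, c, d) g \<and> absv (a - 1) < \<delta> \<and> absv b < \<delta> \<and> absv c < \<delta> \<and> absv (d - 1) < \<delta>"
    obtain ws where ws: "g = m2_prod ws" "set ws \<subseteq> {s, t, m2_adj s, m2_adj t}"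
      using g unfolding gen_group_def by blast
    have "proj_eq (m2_pow s m) m2_id" "proj_eq (m2_pow t n) m2_id"
      using os ot unfolding pgl_has_order_def by auto
    then obtain w where w: "reduced_word m n w" "proj_eq g (eval_word s t w)"
      using normal_form[OF ds dt m n _ _ ws(2)] ws(1) by blast
    show "proj_eq g m2_id"
    proof (cases "w = []")
      case True then show ?thesis using w by simp
    next
      case False
      then show ?thesis using key[OF w(1) False proj_eq_trans[OF _ w(2)]] h by blast
    qed
  qed
  show ?thesis
    using ds dt os ot free disc Sm_fixed[OF z1] Tm_fixed[OF l e1 e0]
    unfolding s_def t_def by blast
qed

end

lemma order_proj_eq: "proj_eq (M::'k::field m2) M' \<Longrightarrow> pgl_has_order M k \<longleftrightarrow> pgl_has_order M' k"
  unfolding pgl_has_order_def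
  by (meson proj_eq_pow proj_eq_sym proj_eq_trans)

lemma eval_word_in_gen: "eval_word s t w \<in> gen_group s t"
proof -
  define ws where "ws = concat (map (\<lambda>(b, k). replicate k (if b then s else t)) w)"
  have "m2_prod ws = eval_word s t w"
    unfolding ws_def eval_word_def m2_prod_concat
    by (induction w) (auto simp: m2_prod_replicate)
  moreover have "set ws \<subseteq> {s, t, m2_adj s, m2_adj t}" unfolding ws_def by auto
  ultimately show ?thesis unfolding gen_group_def by (auto intro!: exI[of _ ws])
qed

definition rw :: "nat \<Rightarrow> nat \<Rightarrow> nat \<Rightarrow> (bool \<times> nat) list" where
  "rw a b j = concat (replicate j [(True, a), (False, b)])"

lemma rw_0[simp]: "rw a b 0 = []" by (simp add: rw_def)
lemma rw_Suc: "rw a b (Suc j) = (True, a) # (False, b) # rw a b j" by (simp add: rw_def)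

lemma rw_reduced: "0 < a \<Longrightarrow> a < m \<Longrightarrow> 0 < b \<Longrightarrow> b < n \<Longrightarrow> reduced_word m n (rw a b j)"
proof (induction j)
  case 0 then show ?case by (simp add: rw_def)
next
  case (Suc j)
  have "rw a b j = [] \<or> fst (hd (rw a b j)) = True" by (cases j) (auto simp: rw_Suc)
  then show ?case using Suc by (auto simp: rw_Suc reduced_Cons)
qed

lemma rw_eval: "eval_word s t (rw a b j) = m2_pow (m2_mult (m2_pow s a) (m2_pow t b)) j"
  by (induction j) (auto simp: rw_Suc m2_pow_Suc m2_mult_assoc)

lemma rw_ne: "0 < j \<Longrightarrow> rw a b j \<noteq> []" by (cases j) (auto simp: rw_Suc)

fun bnd_of :: "('k \<Rightarrow> real) \<Rightarrow> 'k m2 \<Rightarrow> bool" where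
  "bnd_of av (a, b, c, d) \<longleftrightarrow> av a \<le> 1 \<and> av b \<le> 1 \<and> av c \<le> 1 \<and> av d \<le> 1"

fun close_id :: "('k::field \<Rightarrow> real) \<Rightarrow> 'k m2 \<Rightarrow> real \<Rightarrow> bool" where
  "close_id av (a, b, c, d) e \<longleftrightarrow> av (a - 1) < e \<and> av b < e \<and> av c < e \<and> av (d - 1) < e"

fun close2 :: "('k::field \<Rightarrow> real) \<Rightarrow> 'k m2 \<Rightarrow> 'k m2 \<Rightarrow> real \<Rightarrow> bool" where
  "close2 av (a, b, c, d) (a', b', c', d') e \<longleftrightarrow>
     av (a - a') < e \<and> av (b - b') < e \<and> av (c - c') < e \<and> av (d - d') < e"

lemma conj_pow:
  fixes h C :: "'k::field m2"
  assumes "m2_mult (m2_adj h) h = m2_smult r m2_id"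
  shows "0 < j \<Longrightarrow> m2_pow (m2_mult h (m2_mult C (m2_adj h))) j = m2_smult (r ^ (j - 1)) (m2_mult h (m2_mult (m2_pow C j) (m2_adj h)))"
proof (induction j)
  case (Suc j)
  show ?case
  proof (cases j)
    case 0 then show ?thesis by simp
  next
    case (Suc j')
    have "m2_pow (m2_mult h (m2_mult C (m2_adj h))) (Suc j) =
          m2_mult (m2_mult h (m2_mult C (m2_adj h))) (m2_smult (r ^ (j - 1)) (m2_mult h (m2_mult (m2_pow C j) (m2_adj h))))"
      using Suc.IH Suc by (simp add: m2_pow_Suc)
    also have "\<dots> = m2_smult (r ^ (j - 1)) (m2_mult h (m2_mult C (m2_mult (m2_mult (m2_adj h) h) (m2_mult (m2_pow C j) (m2_adj h)))))"
      by (simp add: m2_smult_mult_right m2_mult_assoc)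
    also have "\<dots> = m2_smult (r ^ (j - 1) * r) (m2_mult h (m2_mult (m2_pow C (Suc j)) (m2_adj h)))"
      unfolding assms by (simp add: m2_smult_mult_left m2_smult_mult_right m2_smult_smult m2_pow_Suc m2_mult_assoc)
    finally show ?thesis using Suc by (simp add: mult.commute)
  qed
qed simp

context padic
begin

lemma bnd_mult: "bnd_of absv M \<Longrightarrow> bnd_of absv N \<Longrightarrow> bnd_of absv (m2_mult M N)"
  by (cases M rule: prod_cases4; cases N rule: prod_cases4)
     (auto simp: av_mult intro!: av_add_le mult_le_one)

lemma bnd_pow: "bnd_of absv M \<Longrightarrow> bnd_of absv (m2_pow M k)"
  by (induction k) (auto simp: m2_pow_Suc m2_id_def intro: bnd_mult)

lemma conv_sub:
  fixes f :: "nat \<Rightarrow> 'k" and q :: "nat \<Rightarrow> nat"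
  assumes "\<forall>e>0. \<exists>N. \<forall>i\<ge>N. absv (f i - L) < e" "strict_mono q"
  shows "\<forall>e>0. \<exists>N. \<forall>i\<ge>N. absv (f (q i) - L) < e"
proof (intro allI impI)
  fix e :: real assume "0 < e"
  then obtain N where N: "\<forall>i\<ge>N. absv (f i - L) < e" using assms(1) by blast
  have "\<forall>i\<ge>N. absv (f (q i) - L) < e"
    using N seq_suble[OF assms(2)] by (meson le_trans)
  then show "\<exists>N. \<forall>i\<ge>N. absv (f (q i) - L) < e" by blast
qed

lemma compact4:
  fixes X :: "nat \<Rightarrow> 'k m2"
  assumes b: "\<And>j. bnd_of absv (X j)"
  shows "\<exists>(r::nat\<Rightarrow>nat) L. strict_mono r \<and> (\<forall>e>0. \<exists>N::nat. \<forall>i\<ge>N. close2 absv (X (r i)) L e)"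
proof -
  define x1 where "x1 j = fst (X j)" for j
  define x2 where "x2 j = fst (snd (X j))" for j
  define x3 where "x3 j = fst (snd (snd (X j)))" for j
  define x4 where "x4 j = snd (snd (snd (X j)))" for j
  have XX: "X j = (x1 j, x2 j, x3 j, x4 j)" for j unfolding x1_def x2_def x3_def x4_def by simp
  have b': "absv (x1 j) \<le> 1" "absv (x2 j) \<le> 1" "absv (x3 j) \<le> 1" "absv (x4 j) \<le> 1" for j
    using b[of j] unfolding XX by auto
  have "\<forall>i. absv ((x1) i) \<le> 1" using b'(1) by simp
  from av_compact[OF this] obtain r1 L1 where r1: "strict_mono (r1::nat\<Rightarrow>nat)" "\<forall>e>0. \<exists>N. \<forall>i\<ge>N. absv (x1 (r1 i) - L1) < e"
    by auto
  have "\<forall>i. absv ((\<lambda>i. x2 (r1 i)) i) \<le> 1" using b'(2) by simp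
  from av_compact[OF this] obtain r2 L2 where r2: "strict_mono (r2::nat\<Rightarrow>nat)" "\<forall>e>0. \<exists>N. \<forall>i\<ge>N. absv (x2 (r1 (r2 i)) - L2) < e"
    by auto
  have "\<forall>i. absv ((\<lambda>i. x3 (r1 (r2 i))) i) \<le> 1" using b'(3) by simp
  from av_compact[OF this] obtain r3 L3 where r3: "strict_mono (r3::nat\<Rightarrow>nat)" "\<forall>e>0. \<exists>N. \<forall>i\<ge>N. absv (x3 (r1 (r2 (r3 i))) - L3) < e"
    by auto
  have "\<forall>i. absv ((\<lambda>i. x4 (r1 (r2 (r3 i)))) i) \<le> 1" using b'(4) by simp
  from av_compact[OF this] obtain r4 L4 where r4: "strict_mono (r4::nat\<Rightarrow>nat)" "\<forall>e>0. \<exists>N. \<forall>i\<ge>N. absv (x4 (r1 (r2 (r3 (r4 i)))) - L4) < e"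
    by auto
  define r where "r i = r1 (r2 (r3 (r4 i)))" for i
  have sm: "strict_mono r" unfolding r_def using r1(1) r2(1) r3(1) r4(1)
    by (simp add: strict_mono_def)
  have sm234: "strict_mono (\<lambda>i. r2 (r3 (r4 i)))" using r2(1) r3(1) r4(1) by (simp add: strict_mono_def)
  have sm34: "strict_mono (\<lambda>i. r3 (r4 i))" using r3(1) r4(1) by (simp add: strict_mono_def)
  have c1: "\<forall>e>0. \<exists>N. \<forall>i\<ge>N. absv (x1 (r i) - L1) < e"
    using conv_sub[OF r1(2) sm234] unfolding r_def by simp
  have c2: "\<forall>e>0. \<exists>N. \<forall>i\<ge>N. absv (x2 (r i) - L2) < e"
    using conv_sub[OF r2(2) sm34] unfolding r_def by simp
  have c3: "\<forall>e>0. \<exists>N. \<forall>i\<ge>N. absv (x3 (r i) - L3) < e"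
    using conv_sub[OF r3(2) r4(1)] unfolding r_def by simp
  have c4: "\<forall>e>0. \<exists>N. \<forall>i\<ge>N. absv (x4 (r i) - L4) < e"
    using r4(2) unfolding r_def by simp
  have "\<forall>e>0. \<exists>N. \<forall>i\<ge>N. close2 absv (X (r i)) (L1, L2, L3, L4) e"
  proof (intro allI impI)
    fix e :: real assume e: "0 < e"
    obtain N1 where N1: "\<forall>i\<ge>N1. absv (x1 (r i) - L1) < e" using c1 e by blast
    obtain N2 where N2: "\<forall>i\<ge>N2. absv (x2 (r i) - L2) < e" using c2 e by blast
    obtain N3 where N3: "\<forall>i\<ge>N3. absv (x3 (r i) - L3) < e" using c3 e by blast
    obtain N4 where N4: "\<forall>i\<ge>N4. absv (x4 (r i) - L4) < e" using c4 e by blast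
    show "\<exists>N. \<forall>i\<ge>N. close2 absv (X (r i)) (L1, L2, L3, L4) e"
      by (rule exI[of _ "max (max N1 N2) (max N3 N4)"]) (simp add: XX N1 N2 N3 N4)
  qed
  then show ?thesis using sm by blast
qed


lemma small_comb: "absv x \<le> 1 \<Longrightarrow> absv y \<le> 1 \<Longrightarrow> absv E < e \<Longrightarrow> absv F < e \<Longrightarrow> absv (x * E - y * F) < e"
proof -
  assume h: "absv x \<le> 1" "absv y \<le> 1" "absv E < e" "absv F < e"
  have "absv (x * E) < e" using h(1,3) by (simp add: av_mult) (meson av_nonneg le_less_trans mult_left_le_one_le)
  moreover have "absv (y * F) < e" using h(2,4) by (simp add: av_mult) (meson av_nonneg le_less_trans mult_left_le_one_le)
  ultimately show ?thesis by (rule av_diff_less)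
qed

lemma near_id:
  assumes b: "bnd_of absv P" and d: "absv (m2_det P) = 1" and c: "close2 absv Q P e"
  shows "close_id absv (m2_smult (inverse (m2_det P)) (m2_mult (m2_adj P) Q)) e"
proof -
  obtain p1 p2 p3 p4 where P: "P = (p1, p2, p3, p4)" by (cases P rule: prod_cases4)
  obtain q1 q2 q3 q4 where Q: "Q = (q1, q2, q3, q4)" by (cases Q rule: prod_cases4)
  define D where "D = p1 * p4 - p2 * p3"
  have D0: "D \<noteq> 0" using d P D_def by auto
  have aD: "absv (inverse D) = 1" using d P D_def by (simp add: av_inverse)
  have bb: "absv p1 \<le> 1" "absv p2 \<le> 1" "absv p3 \<le> 1" "absv p4 \<le> 1" using b P by auto
  have cc: "absv (q1 - p1) < e" "absv (q2 - p2) < e" "absv (q3 - p3) < e" "absv (q4 - p4) < e" using c P Q by auto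
  have e1: "inverse D * (p4 * q1 + - p2 * q3) - 1 = inverse D * (p4 * (q1 - p1) - p2 * (q3 - p3))"
    using D0 unfolding D_def by (simp add: field_simps)
  have e2: "inverse D * (p4 * q2 + - p2 * q4) = inverse D * (p4 * (q2 - p2) - p2 * (q4 - p4))"
    using D0 unfolding D_def by (simp add: field_simps)
  have e3: "inverse D * (- p3 * q1 + p1 * q3) = inverse D * (p1 * (q3 - p3) - p3 * (q1 - p1))"
    using D0 unfolding D_def by (simp add: field_simps)
  have e4: "inverse D * (- p3 * q2 + p1 * q4) - 1 = inverse D * (p1 * (q4 - p4) - p3 * (q2 - p2))"
    using D0 unfolding D_def by (simp add: field_simps)
  show ?thesis
    unfolding P Q
    apply (simp only: m2_adj.simps m2_mult.simps m2_smult.simps m2_det.simps close_id.simps)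
    apply (fold D_def)
    apply (simp only: e1 e2 e3 e4 av_mult aD mult_1)
    using small_comb bb cc by auto
qed

lemma conj_close:
  assumes c: "close_id absv D e" and r: "r \<noteq> 0" "absv r \<le> 1" and e: "0 < e"
  shows "close_id absv (m2_smult (inverse r) (m2_mult (r, 1, 0, 1) (m2_mult D (1, -1, 0, r)))) (e / absv r)"
proof -
  obtain x1 x2 x3 x4 where D: "D = (x1, x2, x3, x4)" by (cases D rule: prod_cases4)
  have ar: "0 < absv r" using r av_pos by simp
  have cc: "absv (x1 - 1) < e" "absv x2 < e" "absv x3 < e" "absv (x4 - 1) < e" using c D by auto
  have ee: "e \<le> e / absv r" using ar r(2) e by (simp add: le_divide_eq)
  have le: "a < e \<Longrightarrow> a < e / absv r" for a using ee by linarith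
  have x3r: "absv (x3 / r) < e / absv r" using cc(3) ar by (simp add: av_divide divide_strict_right_mono)
  have M: "m2_smult (inverse r) (m2_mult (r, 1, 0, 1) (m2_mult (x1, x2, x3, x4) (1, -1, 0, r))) =
     (((x1 - 1) + x3 / r) + 1, (- (x1 - 1) - x3 / r + r * x2) + (x4 - 1), x3 / r, ((x4 - 1) - x3 / r) + 1)"
    using r by (simp add: field_simps)
  have a1: "absv (x1 - 1) < e / absv r" using le cc by blast
  have a2: "absv x2 < e / absv r" using le cc by blast
  have a4: "absv (x4 - 1) < e / absv r" using le cc by blast
  have a2': "absv (r * x2) < e / absv r" using a2 r(2) by (simp add: av_mult) (meson av_nonneg le_less_trans mult_left_le_one_le)
  show ?thesis
    unfolding D
    apply (simp only: M close_id.simps add_diff_cancel_right')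
    apply (intro conjI)
    subgoal by (rule av_add_less[OF a1 x3r])
    subgoal
      apply (rule av_add_less[OF av_add_less[OF av_diff_less[OF _ x3r] a2'] a4])
      using a1 by (simp add: av_diff_sym)
    subgoal by (rule x3r)
    subgoal by (rule av_diff_less[OF a4 x3r])
    done
qed

end

lemma close2_trans: "close2 av Q L e \<Longrightarrow> close2 av P L e \<Longrightarrow>
   (\<And>x y. av x < e \<Longrightarrow> av y < e \<Longrightarrow> av (x - y) < e) \<Longrightarrow> close2 av Q P e"
proof -
  assume a: "close2 av Q L e" "close2 av P L e" and d: "\<And>x y. av x < e \<Longrightarrow> av y < e \<Longrightarrow> av (x - y) < e"
  obtain q1 q2 q3 q4 where Q: "Q = (q1, q2, q3, q4)" by (cases Q rule: prod_cases4)
  obtain p1 p2 p3 p4 where P: "P = (p1, p2, p3, p4)" by (cases P rule: prod_cases4)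
  obtain l1 l2 l3 l4 where L: "L = (l1, l2, l3, l4)" by (cases L rule: prod_cases4)
  have *: "av (q - p) < e" if "av (q - l) < e" "av (p - l) < e" for q p l
    using d[OF that] by simp
  show ?thesis using a unfolding Q P L by (auto intro: *)
qed

lemma proj_eq_of_smult_eq:
  fixes X Y :: "'k::field m2"
  assumes "a \<noteq> 0" "b \<noteq> 0" "m2_smult a X = m2_smult b Y"
  shows "proj_eq X Y"
proof -
  have "X = m2_smult (inverse a) (m2_smult a X)" using assms(1) by (simp add: m2_smult_smult)
  also have "\<dots> = m2_smult (inverse a * b) Y" using assms(3) by (simp add: m2_smult_smult)
  finally show ?thesis unfolding proj_eq_def using assms by (intro exI[of _ "inverse a * b"]) simp
qed

lemma t_shape:
  fixes tc td lam \<eta> :: "'k::field_char_0"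
  assumes h1: "(tc + td) * \<eta> = tc * lam + td"
  shows "m2_smult (tc + td) (Tm lam \<eta>) = m2_smult (lam - 1) (tc * (lam + 1) + td, - tc * lam, tc, td)"
  unfolding Tm_def
  apply (simp only: m2_smult.simps prod.inject)
  apply (intro conjI)
  using h1 by algebra+

lemma conj_shape:
  fixes z' e' lam r c0 :: "'k::field_char_0"
  assumes "c0 * (lam - 1) = r * (e' - 1)" "r = 1 - z'"
  shows "m2_smult (lam - 1) (m2_mult (r, 1, 0, 1) (m2_mult (m2_mult (z', -1, 0, 1) (e', 0, c0, 1)) (1, -1, 0, r)))
     = m2_smult r (m2_mult (Sm z') (Tm lam e'))"
  unfolding Tm_def Sm_def
  apply (simp only: m2_smult.simps m2_mult.simps prod.inject)
  apply (intro conjI)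
  using assms by algebra+

context padic
begin

lemma necessity:
  fixes s t :: "'k m2" and lam :: 'k
  assumes rootm: "\<exists>z::'k. primitive_root_of_unity m z" and rootn: "\<exists>z::'k. primitive_root_of_unity n z"
    and m: "2 \<le> m" and n: "2 \<le> n"
    and os: "pgl_has_order s m" and ot: "pgl_has_order t n"
    and free: "free_product_via m n s t" and disc: "pgl_discrete absv (gen_group s t)"
    and fs: "fixed_points s = {Some 0, None}" and ft: "fixed_points t = {Some 1, Some lam}"
  shows "absv (lam - 1) < af m * af n"
proof (rule ccontr)
  assume "\<not> absv (lam - 1) < af m * af n"
  then have ge: "af m * af n \<le> absv (lam - 1)" by simp
  have m0: "0 < m" and n0: "0 < n" using m n by auto
  obtain z0 :: 'k where z0: "primitive_root_of_unity m z0" using rootm by blast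
  obtain e0 :: 'k where e0: "primitive_root_of_unity n e0" using rootn by blast
  have afm: "0 < af m" "af m \<le> 1" using af_props[OF z0 m0] by auto
  have afn: "0 < af n" "af n \<le> 1" using af_props[OF e0 n0] by auto
  have dpos: "0 < absv (lam - 1)" using ge afm afn by (smt (verit) mult_pos_pos)
  then have l1: "lam \<noteq> 1" by auto
  obtain sa sb sc sd where S: "s = (sa, sb, sc, sd)" by (cases s rule: prod_cases4)
  have "None \<in> fixed_points s" using fs by simp
  then have sc: "sc = 0" using S unfolding fixed_points_def by (auto split: if_splits)
  have "Some 0 \<in> fixed_points s" using fs by simp
  then have sbd: "sd \<noteq> 0 \<and> sb = 0" using S sc unfolding fixed_points_def by (auto split: if_splits)
  define \<zeta> where "\<zeta> = sa / sd"
  have sS: "s = m2_smult sd (Sm \<zeta>)" using S sc sbd unfolding \<zeta>_def Sm_def by simp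
  have pS: "proj_eq s (Sm \<zeta>)" unfolding sS by (rule proj_eq_smult) (use sbd in simp)
  have z: "primitive_root_of_unity m \<zeta>" using os order_proj_eq[OF pS] Sm_order[OF m0, of \<zeta>] by blast
  obtain ta tb tc td where T: "t = (ta, tb, tc, td)" by (cases t rule: prod_cases4)
  have "None \<notin> fixed_points t" using ft by simp
  then have tc: "tc \<noteq> 0" using T unfolding fixed_points_def by (auto split: if_splits)
  have "Some 1 \<in> fixed_points t" using ft by simp
  then have f1: "tc + td \<noteq> 0 \<and> ta + tb = tc + td" using T unfolding fixed_points_def
    by (auto split: if_splits simp: divide_eq_eq)
  have "Some lam \<in> fixed_points t" using ft by simp
  then have f2: "tc * lam + td \<noteq> 0 \<and> ta * lam + tb = lam * (tc * lam + td)" using T unfolding fixed_points_def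
    by (auto split: if_splits simp: divide_eq_eq)
  have ta: "ta = tc * (lam + 1) + td"
  proof -
    have g1: "ta + tb = tc + td" and g2: "ta * lam + tb = lam * (tc * lam + td)" using f1 f2 by auto
    have "(ta - (tc * (lam + 1) + td)) * (lam - 1) = 0"
      using g1 g2 by algebra
    then show ?thesis using l1 by simp
  qed
  have tb: "tb = - tc * lam" using f1 ta by algebra
  define \<eta> where "\<eta> = (tc * lam + td) / (tc + td)"
  define \<kappa> where "\<kappa> = (tc + td) / (lam - 1)"
  have \<kappa>0: "\<kappa> \<noteq> 0" using f1 l1 unfolding \<kappa>_def by simp
  have \<eta>0: "\<eta> \<noteq> 0" using f1 f2 unfolding \<eta>_def by simp
  have h1: "(tc + td) * \<eta> = tc * lam + td" unfolding \<eta>_def using f1 by simp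
  have pT: "proj_eq t (Tm lam \<eta>)"
    by (rule proj_eq_of_smult_eq[of "lam - 1" "tc + td"]) (use l1 f1 t_shape[OF h1] in \<open>auto simp: T ta tb\<close>)
  have e: "primitive_root_of_unity n \<eta>" using ot order_proj_eq[OF pT] Tm_order[OF l1 n0, of \<eta>] by blast
  define ks where "ks = kk m"
  define kt where "kt = kk n"
  have ks: "0 < ks" "ks < m" "\<zeta> ^ ks \<noteq> 1" "absv (1 - \<zeta> ^ ks) \<le> af m" using kk_props[OF z m] unfolding ks_def by auto
  have kt: "0 < kt" "kt < n" "absv (1 - \<eta> ^ kt) \<le> af n" using kk_props[OF e n] unfolding kt_def by auto
  define z' where "z' = \<zeta> ^ ks"
  define e' where "e' = \<eta> ^ kt"
  have az: "absv \<zeta> = 1" using av_root_unity z m0 unfolding primitive_root_of_unity_def by blast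
  have ae: "absv \<eta> = 1" using av_root_unity e n0 unfolding primitive_root_of_unity_def by blast
  have az': "absv z' = 1" unfolding z'_def by (simp add: av_power az)
  have ae': "absv e' = 1" unfolding e'_def by (simp add: av_power ae)
  have ps': "proj_eq (m2_pow s ks) (Sm z')" using proj_eq_pow[OF pS] unfolding z'_def Sm_pow .
  have pt': "proj_eq (m2_pow t kt) (Tm lam e')"
  proof -
    have "proj_eq (m2_pow t kt) (m2_pow (Tm lam \<eta>) kt)" by (rule proj_eq_pow[OF pT])
    moreover have "proj_eq (m2_pow (Tm lam \<eta>) kt) (Tm lam e')"
      unfolding Tm_pow[OF kt(1)] e'_def using l1 by (simp add: proj_eq_smult)
    ultimately show ?thesis by (rule proj_eq_trans)
  qed
  define r where "r = 1 - z'"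
  have r0: "r \<noteq> 0" using ks(3) unfolding r_def z'_def by simp
  have ar: "absv r \<le> af m" using ks(4) unfolding r_def z'_def .
  have ar1: "absv r \<le> 1" using ar afm by linarith
  have arpos: "0 < absv r" using r0 av_pos by simp
  define h where "h = (r, 1::'k, 0::'k, 1::'k)"
  define c0 where "c0 = r * (e' - 1) / (lam - 1)"
  define A where "A = (z', -1::'k, 0::'k, 1::'k)"
  define B where "B = (e', 0::'k, c0, 1::'k)"
  define C where "C = m2_mult A B"
  have hadj: "m2_adj h = (1, -1, 0, r)" unfolding h_def by simp
  have c0l: "c0 * (lam - 1) = r * (e' - 1)" unfolding c0_def using l1 by simp
  have conjC: "proj_eq (m2_mult h (m2_mult C (m2_adj h))) (m2_mult (Sm z') (Tm lam e'))"
    by (rule proj_eq_of_smult_eq[of "lam - 1" r]) (use l1 r0 conj_shape[OF c0l] in \<open>auto simp: hadj h_def C_def A_def B_def r_def\<close>)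
  have rl0: "r / (lam - 1) \<noteq> 0" using r0 l1 by simp
  have ac0: "absv c0 \<le> 1"
  proof -
    have "absv c0 = absv r * absv (1 - e') / absv (lam - 1)"
      unfolding c0_def by (simp add: av_divide av_mult av_diff_sym)
    also have "\<dots> \<le> af m * af n / absv (lam - 1)"
      using ar kt(3) arpos afn unfolding e'_def
      by (intro divide_right_mono mult_mono) auto
    also have "\<dots> \<le> 1" using ge dpos by simp
    finally show ?thesis .
  qed
  have bA: "bnd_of absv A" unfolding A_def using az' by simp
  have bB: "bnd_of absv B" unfolding B_def using ae' ac0 by simp
  have bC: "bnd_of absv C" unfolding C_def using bnd_mult[OF bA bB] .
  have dC: "m2_det C = z' * e'" unfolding C_def A_def B_def by (simp add: algebra_simps)
  have adC: "absv (m2_det (m2_pow C j)) = 1" for j by (simp add: m2_det_pow dC av_power av_mult az' ae')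
  obtain rr L where rr: "strict_mono rr" "\<forall>e>0. \<exists>N::nat. \<forall>i\<ge>N. close2 absv (m2_pow C (rr i)) L e"
    using compact4[of "\<lambda>j. m2_pow C j"] bnd_pow[OF bC] by blast
  obtain e0 where e0: "e0 > 0" and discr: "\<forall>g\<in>gen_group s t. \<forall>a b c d.
        proj_eq (a, b, c, d) g \<and> absv (a - 1) < e0 \<and> absv b < e0 \<and>
        absv c < e0 \<and> absv (d - 1) < e0 \<longrightarrow> proj_eq g m2_id"
    using disc unfolding pgl_discrete_def by blast
  define \<epsilon> where "\<epsilon> = e0 * absv r"
  have \<epsilon>: "0 < \<epsilon>" unfolding \<epsilon>_def using e0 arpos by simp
  obtain N where N: "\<forall>i\<ge>N. close2 absv (m2_pow C (rr i)) L \<epsilon>" using rr(2) \<epsilon> by blast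
  define k1 where "k1 = rr N"
  define k2 where "k2 = rr (Suc N)"
  have k12: "k1 < k2" unfolding k1_def k2_def using rr(1) by (simp add: strict_mono_def)
  define k where "k = k2 - k1"
  have k0: "0 < k" unfolding k_def using k12 by simp
  define P where "P = m2_pow C k1"
  define Q where "Q = m2_pow C k2"
  have cQP: "close2 absv Q P \<epsilon>"
    using close2_trans[of absv Q L \<epsilon> P] N av_diff_less unfolding P_def Q_def k1_def k2_def by auto
  have QPk: "Q = m2_mult P (m2_pow C k)" unfolding Q_def P_def k_def using k12 by (simp add: m2_pow_add[symmetric])
  have dP: "absv (m2_det P) = 1" unfolding P_def by (rule adC)
  have dP0: "m2_det P \<noteq> 0" using dP by auto
  define D where "D = m2_smult (inverse (m2_det P)) (m2_mult (m2_adj P) Q)"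
  have DC: "D = m2_pow C k"
    unfolding D_def QPk m2_mult_assoc[symmetric] m2_adj_mult m2_smult_mult_left m2_smult_smult
    using dP0 by simp
  have bP: "bnd_of absv P" unfolding P_def by (rule bnd_pow[OF bC])
  have cD: "close_id absv D \<epsilon>" unfolding D_def by (rule near_id[OF bP dP cQP])
  define W where "W = m2_smult (inverse r) (m2_mult (r, 1, 0, 1) (m2_mult D (1, -1, 0, r)))"
  have cW: "close_id absv W e0"
    using conj_close[OF cD r0 ar1 \<epsilon>] arpos r0 unfolding W_def \<epsilon>_def by simp
  have hh: "m2_mult (m2_adj h) h = m2_smult r m2_id" unfolding m2_adj_mult h_def by simp
  define g where "g = eval_word s t (rw ks kt k)"
  have gG: "g \<in> gen_group s t" unfolding g_def by (rule eval_word_in_gen)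
  have pW: "proj_eq W g"
  proof -
    have "proj_eq W (m2_mult h (m2_mult (m2_pow C k) (m2_adj h)))"
      unfolding W_def DC hadj h_def using r0 by (simp add: proj_eq_smult)
    moreover have "proj_eq (m2_mult h (m2_mult (m2_pow C k) (m2_adj h))) (m2_pow (m2_mult h (m2_mult C (m2_adj h))) k)"
      unfolding conj_pow[OF hh k0] using r0 by (simp add: proj_eq_smult')
    moreover have "proj_eq (m2_pow (m2_mult h (m2_mult C (m2_adj h))) k) (m2_pow (m2_mult (Sm z') (Tm lam e')) k)"
      by (rule proj_eq_pow[OF conjC])
    moreover have "proj_eq (m2_pow (m2_mult (Sm z') (Tm lam e')) k) g"
      unfolding g_def rw_eval
      by (rule proj_eq_pow[OF proj_eq_mult[OF proj_eq_sym[OF ps'] proj_eq_sym[OF pt']]])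
    ultimately show ?thesis using proj_eq_trans by blast
  qed
  obtain wa wb wc wd where Wt: "W = (wa, wb, wc, wd)" by (cases W rule: prod_cases4)
  have "proj_eq (wa, wb, wc, wd) g \<and> absv (wa - 1) < e0 \<and> absv wb < e0 \<and> absv wc < e0 \<and> absv (wd - 1) < e0"
    using pW cW unfolding Wt by simp
  from discr[rule_format, OF gG this] have pg: "proj_eq g m2_id" .
  have "reduced_word m n (rw ks kt k)" by (rule rw_reduced[OF ks(1,2) kt(1,2)])
  moreover have "rw ks kt k \<noteq> []" by (rule rw_ne[OF k0])
  ultimately have "\<not> proj_eq (eval_word s t (rw ks kt k)) m2_id"
    using free unfolding free_product_via_def by blast
  then show False using pg unfolding g_def by simp
qed

end

theorem mainTheorem4:
  fixes absv :: "'k::field_char_0 \<Rightarrow> real" and p m n :: nat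
  assumes K: "padic_local_field p absv"
    and m: "m \<ge> 2" and n: "n \<ge> 2"
    and rootm: "\<exists>z::'k. primitive_root_of_unity m z"
    and rootn: "\<exists>z::'k. primitive_root_of_unity n z"
  shows
   "(\<forall>(s::'k m2) t lam.
       m2_det s \<noteq> 0 \<and> m2_det t \<noteq> 0 \<and>
       pgl_has_order s m \<and> pgl_has_order t n \<and>
       free_product_via m n s t \<and>
       pgl_discrete absv (gen_group s t) \<and>
       fixed_points s = {Some 0, None} \<and>
       fixed_points t = {Some 1, Some lam} \<and>
       absv lam = 1
       \<longrightarrow> absv (lam - 1) < alpha absv p m n)
    \<and>
    (\<forall>lam::'k. absv lam = 1 \<and> lam \<noteq> 1 \<and> absv (lam - 1) < alpha absv p m n \<longrightarrow>
       (\<exists>s t. m2_det s \<noteq> 0 \<and> m2_det t \<noteq> 0 \<and>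
          pgl_has_order s m \<and> pgl_has_order t n \<and>
          fixed_points s = {Some 0, None} \<and>
          fixed_points t = {Some 1, Some lam} \<and>
          free_product_via m n s t \<and>
          pgl_discrete absv (gen_group s t)))"
  proof -
  interpret padic p absv using K by (simp add: padic_def)
  have al: "alpha absv p m n = af m * af n" by (simp add: alpha_eq af_def)
  show ?thesis
  proof (intro conjI allI impI)
    fix s t :: "'k m2" and lam :: 'k
    assume H: "m2_det s \<noteq> 0 \<and> m2_det t \<noteq> 0 \<and>
       pgl_has_order s m \<and> pgl_has_order t n \<and>
       free_product_via m n s t \<and>
       pgl_discrete absv (gen_group s t) \<and>
       fixed_points s = {Some 0, None} \<and>
       fixed_points t = {Some 1, Some lam} \<and>
       absv lam = 1"
    then show "absv (lam - 1) < alpha absv p m n"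
      using necessity[OF rootm rootn m n, of s t lam] al by auto
  next
    fix lam :: 'k
    assume H: "absv lam = 1 \<and> lam \<noteq> 1 \<and> absv (lam - 1) < alpha absv p m n"
    obtain z :: 'k where z: "primitive_root_of_unity m z" using rootm by blast
    obtain e :: 'k where e: "primitive_root_of_unity n e" using rootn by blast
    have "absv (lam - 1) < af m * af n" using H al by simp
    from construction[OF z e m n _ this] H
    show "\<exists>s t. m2_det s \<noteq> 0 \<and> m2_det t \<noteq> 0 \<and>
          pgl_has_order s m \<and> pgl_has_order t n \<and>
          fixed_points s = {Some 0, None} \<and>
          fixed_points t = {Some 1, Some lam} \<and>
          free_product_via m n s t \<and>
          pgl_discrete absv (gen_group s t)" by blast
  qed
qed

end
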